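(* Let $\mathcal{F}:\mathcal{T}^Y\to\mathcal{T}^Z$ be a cover between trees of spheres. Then every critical vertex of $T^Y$ lies on a path connecting two critical leaves, and every vertex on this path is critical.
   Context: Trees are finite connected graphs without cycles (vertex set $V$, edges $2$-element subsets of $V$, $E_v$ the set of edges containing $v$); leaves are vertices of valence $1$, the others are internal vertices ($IV$). Between two vertices there is a unique path (alternating sequence of distinct vertices and edges, consecutive ones incident). A tree of spheres $\mathcal{T}^X$ marked by a finite set $X$ ($\ge3$ elements) consists of a tree $T^X$ whose leaf set is $X$ and, for each internal vertex $v$, a topological $2$-sphere $\mathcal{S}_v$ and an injection $i_v:E_v\to\mathcal{S}_v$; $X_v:=i_v(E_v)$. A cover $\mathcal{F}:\mathcal{T}^Y\to\mathcal{T}^Z$ consists of a map $F:T^Y\to T^Z$ sending vertices to vertices and each edge $\{v,w\}$ to the edge $\{F(v),F(w)\}$, with $F(Y)\subseteq Z$, $F(IV^Y)\subseteq IV^Z$, and for each $v\in IV^Y$, $w=F(v)$, a topological branched covering $f_v:\mathcal{S}_v\to\mathcal{S}_w$ such that $f_v:\mathcal{S}_v\setminus Y_v\to\mathcal{S}_w\setminus Z_w$ is a covering map, $f_v\circ i_v=i_w\circ F$ on $E_v$, and for an edge $e=\{v_1,v_2\}$ between internal vertices $\deg_{i_{v_1}(e)}f_{v_1}=\deg_{i_{v_2}(e)}f_{v_2}$. Degrees: $\deg(v)=\deg f_v$ for internal $v$; for a leaf $y$ joined by the edge $e$ to the internal vertex $v$, $\deg(y)=\deg_{i_v(e)}f_v$.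 A critical vertex (resp. critical leaf) is a vertex (resp. leaf) of $T^Y$ of degree $>1$. *)

theory Defs
  imports "HOL-Analysis.Analysis"
begin

definition graph :: "'v set \<Rightarrow> 'v set set \<Rightarrow> bool" where
  "graph V E \<longleftrightarrow> finite V \<and> (\<forall>e\<in>E. \<exists>a b. a \<noteq> b \<and> e = {a, b} \<and> a \<in> V \<and> b \<in> V)"

text \<open>A path: a nonempty list of distinct vertices, consecutive ones joined by an edge
  (the edges of the path are then determined by the vertices).\<close>

definition vpath :: "'v set set \<Rightarrow> 'v list \<Rightarrow> bool" where
  "vpath E xs \<longleftrightarrow> xs \<noteq> [] \<and> distinct xs \<and> (\<forall>i. Suc i < length xs \<longrightarrow> {xs ! i, xs ! Suc i} \<in> E)"

definition path_between :: "'v set set \<Rightarrow> 'v \<Rightarrow> 'v \<Rightarrow> 'v list \<Rightarrow> bool" where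
  "path_between E a b xs \<longleftrightarrow> vpath E xs \<and> hd xs = a \<and> last xs = b"

definition graph_connected :: "'v set \<Rightarrow> 'v set set \<Rightarrow> bool" where
  "graph_connected V E \<longleftrightarrow> (\<forall>a\<in>V. \<forall>b\<in>V. \<exists>xs. path_between E a b xs)"

definition has_cycle :: "'v set set \<Rightarrow> bool" where
  "has_cycle E \<longleftrightarrow> (\<exists>xs. vpath E xs \<and> 3 \<le> length xs \<and> {last xs, hd xs} \<in> E)"

definition is_tree :: "'v set \<Rightarrow> 'v set set \<Rightarrow> bool" where
  "is_tree V E \<longleftrightarrow> graph V E \<and> V \<noteq> {} \<and> graph_connected V E \<and> \<not> has_cycle E"

definition edges_at :: "'v set set \<Rightarrow> 'v \<Rightarrow> 'v set set" where
  "edges_at E v = {e \<in> E. v \<in> e}"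

definition leaves :: "'v set \<Rightarrow> 'v set set \<Rightarrow> 'v set" where
  "leaves V E = {v \<in> V. card (edges_at E v) = 1}"

definition internal :: "'v set \<Rightarrow> 'v set set \<Rightarrow> 'v set" where
  "internal V E = V - leaves V E"

definition branched_at ::
  "(real^3) set \<Rightarrow> (real^3) set \<Rightarrow> (real^3 \<Rightarrow> real^3) \<Rightarrow> real^3 \<Rightarrow> nat \<Rightarrow> bool" where
  "branched_at S T f p d \<longleftrightarrow>
     (\<exists>U W \<phi> \<phi>' \<psi> \<psi>'. openin (top_of_set S) U \<and> p \<in> U \<and> openin (top_of_set T) W \<and> f ` U = W \<and>
        homeomorphism U (ball (0::complex) 1) \<phi> \<phi>' \<and> homeomorphism W (ball (0::complex) 1) \<psi> \<psi>' \<and>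
        \<phi> p = 0 \<and> \<psi> (f p) = 0 \<and> (\<forall>x\<in>U. \<psi> (f x) = (\<phi> x) ^ d))"

definition branched_covering :: "(real^3) set \<Rightarrow> (real^3) set \<Rightarrow> (real^3 \<Rightarrow> real^3) \<Rightarrow> bool" where
  "branched_covering S T f \<longleftrightarrow> continuous_on S f \<and> f ` S = T \<and>
     (\<forall>p\<in>S. \<exists>d>0. branched_at S T f p d)"

definition local_degree :: "(real^3) set \<Rightarrow> (real^3) set \<Rightarrow> (real^3 \<Rightarrow> real^3) \<Rightarrow> real^3 \<Rightarrow> nat" where
  "local_degree S T f p = (THE d. 0 < d \<and> branched_at S T f p d)"

definition branched_degree :: "(real^3) set \<Rightarrow> (real^3) set \<Rightarrow> (real^3 \<Rightarrow> real^3) \<Rightarrow> nat" where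
  "branched_degree S T f = (THE n. \<exists>B. finite B \<and> (\<forall>q\<in>T - B. card (S \<inter> f -` {q}) = n))"

text \<open>S v is the sphere at the internal vertex v, i v the injection of the edges at v.\<close>

definition tree_of_spheres ::
  "'v set \<Rightarrow> 'v set set \<Rightarrow> 'v set \<Rightarrow> ('v \<Rightarrow> (real^3) set) \<Rightarrow> ('v \<Rightarrow> 'v set \<Rightarrow> real^3) \<Rightarrow> bool" where
  "tree_of_spheres V E X S i \<longleftrightarrow> is_tree V E \<and> leaves V E = X \<and> 3 \<le> card X \<and>
     (\<forall>v\<in>internal V E. S v homeomorphic sphere (0::real^3) 1 \<and>
        inj_on (i v) (edges_at E v) \<and> i v ` edges_at E v \<subseteq> S v)"

definition marked :: "'v set set \<Rightarrow> ('v \<Rightarrow> 'v set \<Rightarrow> real^3) \<Rightarrow> 'v \<Rightarrow> (real^3) set" where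
  "marked E i v = i v ` edges_at E v"

definition is_cover ::
  "'v set \<Rightarrow> 'v set set \<Rightarrow> 'v set \<Rightarrow> ('v \<Rightarrow> (real^3) set) \<Rightarrow> ('v \<Rightarrow> 'v set \<Rightarrow> real^3) \<Rightarrow>
   'w set \<Rightarrow> 'w set set \<Rightarrow> 'w set \<Rightarrow> ('w \<Rightarrow> (real^3) set) \<Rightarrow> ('w \<Rightarrow> 'w set \<Rightarrow> real^3) \<Rightarrow>
   ('v \<Rightarrow> 'w) \<Rightarrow> ('v \<Rightarrow> real^3 \<Rightarrow> real^3) \<Rightarrow> bool" where
  "is_cover VY EY Y SY iY VZ EZ Z SZ iZ F f \<longleftrightarrow>
     tree_of_spheres VY EY Y SY iY \<and> tree_of_spheres VZ EZ Z SZ iZ \<and>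
     F ` VY \<subseteq> VZ \<and>
     (\<forall>a b. {a, b} \<in> EY \<longrightarrow> {F a, F b} \<in> EZ) \<and>
     F ` Y \<subseteq> Z \<and> F ` internal VY EY \<subseteq> internal VZ EZ \<and>
     (\<forall>v\<in>internal VY EY.
        branched_covering (SY v) (SZ (F v)) (f v) \<and>
        covering_space (SY v - marked EY iY v) (f v) (SZ (F v) - marked EZ iZ (F v)) \<and>
        (\<forall>e\<in>edges_at EY v. f v (iY v e) = iZ (F v) (F ` e))) \<and>
     (\<forall>v1 v2. {v1, v2} \<in> EY \<and> v1 \<in> internal VY EY \<and> v2 \<in> internal VY EY \<longrightarrow>
        local_degree (SY v1) (SZ (F v1)) (f v1) (iY v1 {v1, v2}) =
        local_degree (SY v2) (SZ (F v2)) (f v2) (iY v2 {v1, v2}))"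

text \<open>Degree of a vertex of T^Y: deg f_v for internal v; for a leaf y with (unique) edge e
  to the vertex u, the local degree of f_u at i_u(e).\<close>

definition cover_vdeg ::
  "'v set \<Rightarrow> 'v set set \<Rightarrow> ('v \<Rightarrow> (real^3) set) \<Rightarrow> ('v \<Rightarrow> 'v set \<Rightarrow> real^3) \<Rightarrow>
   ('w \<Rightarrow> (real^3) set) \<Rightarrow> ('v \<Rightarrow> 'w) \<Rightarrow> ('v \<Rightarrow> real^3 \<Rightarrow> real^3) \<Rightarrow> 'v \<Rightarrow> nat" where
  "cover_vdeg VY EY SY iY SZ F f v =
     (if v \<in> internal VY EY then branched_degree (SY v) (SZ (F v)) (f v)
      else (let e = (THE e. e \<in> edges_at EY v); u = (THE u. u \<in> e \<and> u \<noteq> v)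
            in local_degree (SY u) (SZ (F u)) (f u) (iY u e)))"

end

theory Submission
  imports Defs
begin

lemma homeo_diff:
  assumes "homeomorphism X Y h k" "B \<subseteq> X"
  shows "homeomorphism (X - B) (Y - h ` B) h k"
proof (rule homeomorphism_of_subsets[OF assms(1)])
  have hX: "h ` X = Y" and k1: "\<And>x. x \<in> X \<Longrightarrow> k (h x) = x"
    using assms(1) by (auto simp: homeomorphism_def)
  show "h ` (X - B) = Y - h ` B"
  proof
    show "h ` (X - B) \<subseteq> Y - h ` B"
    proof
      fix y assume "y \<in> h ` (X - B)"
      then obtain x where x: "x \<in> X" "x \<notin> B" "y = h x" by blast
      have "y \<notin> h ` B"
      proof
        assume "y \<in> h ` B"
        then obtain b where "b \<in> B" "y = h b" by blast
        then have "k (h b) = b" using assms(2) k1 by blast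
        then show False using x k1 \<open>y = h b\<close> \<open>b \<in> B\<close> by metis
      qed
      then show "y \<in> Y - h ` B" using x hX by blast
    qed
    show "Y - h ` B \<subseteq> h ` (X - B)" using hX by blast
  qed
qed auto

lemma homeomorphic_diff:
  assumes "X homeomorphic Y" "finite B"
  obtains B' where "finite B'" "(X - B) homeomorphic (Y - B')"
proof -
  obtain h k where hk: "homeomorphism X Y h k" using assms homeomorphic_def by blast
  have e: "X - B = X - (X \<inter> B)" by auto
  have "homeomorphism (X - B) (Y - h ` (X \<inter> B)) h k"
    unfolding e by (rule homeo_diff[OF hk]) auto
  moreover have "finite (h ` (X \<inter> B))" using assms(2) by simp
  ultimately show ?thesis using that homeomorphic_def by blast
qed

definition H3 :: "(real^3) set" where "H3 = {x. (axis 1 1 :: real^3) \<bullet> x = 0}"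

lemma H3_props: "convex H3" "\<not> collinear H3"
  unfolding H3_def
  by (simp_all add: convex_hyperplane collinear_aff_dim)

lemma punct_sphere_H3:
  assumes "b \<in> sphere (0::real^3) 1"
  shows "(sphere (0::real^3) 1 - {b}) homeomorphic H3"
  unfolding H3_def
  by (rule homeomorphic_punctured_sphere_hyperplane) (use assms in auto)

lemma connected_sphere_minus_finite:
  assumes "finite A"
  shows "connected (sphere (0::real^3) 1 - A)"
proof (cases "A \<inter> sphere 0 1 = {}")
  case True
  then have "sphere (0::real^3) 1 - A = sphere 0 1" by auto
  then show ?thesis by (simp add: connected_sphere)
next
  case False
  then obtain b where b: "b \<in> A" "b \<in> sphere (0::real^3) 1" by blast
  obtain h k where hk: "homeomorphism (sphere (0::real^3) 1 - {b}) H3 h k"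
    using punct_sphere_H3[OF b(2)] homeomorphic_def by blast
  have e: "sphere (0::real^3) 1 - A = (sphere 0 1 - {b}) - ((sphere 0 1 - {b}) \<inter> A)" using b by auto
  have "homeomorphism (sphere (0::real^3) 1 - A) (H3 - h ` ((sphere 0 1 - {b}) \<inter> A)) h k"
    unfolding e by (rule homeo_diff[OF hk]) auto
  then have 1: "(sphere (0::real^3) 1 - A) homeomorphic (H3 - h ` ((sphere 0 1 - {b}) \<inter> A))"
    using homeomorphic_def by blast
  have "path_connected (H3 - h ` ((sphere 0 1 - {b}) \<inter> A))"
    by (rule path_connected_convex_diff_countable) (use H3_props assms in \<open>auto intro: countable_finite\<close>)
  then have "connected (H3 - h ` ((sphere 0 1 - {b}) \<inter> A))"
    by (rule path_connected_imp_connected)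
  then show ?thesis using homeomorphic_connectedness[OF 1] by simp
qed

lemma connected_sph_minus_finite:
  assumes "X homeomorphic sphere (0::real^3) 1" "finite A"
  shows "connected (X - A)"
proof -
  obtain B' where "finite B'" and h: "(X - A) homeomorphic (sphere (0::real^3) 1 - B')"
    using homeomorphic_diff[OF assms] by blast
  then show ?thesis using connected_sphere_minus_finite homeomorphic_connectedness[OF h] by simp
qed

lemma infinite_sph:
  assumes "X homeomorphic sphere (0::real^3) 1"
  shows "infinite X"
proof
  assume fin: "finite X"
  obtain h k where hk: "homeomorphism X (sphere (0::real^3) 1) h k" using assms homeomorphic_def by blast
  then have "h ` X = sphere 0 1" by (simp add: homeomorphism_def)
  then have fs: "finite (sphere (0::real^3) 1)" using fin by (metis finite_imageI)
  have c: "connected (sphere (0::real^3) 1)" by (simp add: connected_sphere)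
  have a1: "axis 1 1 \<in> sphere (0::real^3) 1" "- axis 1 1 \<in> sphere (0::real^3) 1"
    by auto
  have ne: "axis 1 1 \<noteq> - (axis 1 1 :: real^3)"
  proof
    assume eq: "axis 1 1 = - (axis 1 1 :: real^3)"
    have a: "(axis 1 1 :: real^3) $ 1 = 1" by (simp add: axis_def)
    have b: "(- axis 1 1 :: real^3) $ 1 = -1" by (simp add: axis_def)
    have "(axis 1 1 :: real^3) $ 1 = (- (axis 1 1 :: real^3)) $ 1" using eq by (rule arg_cong)
    then show False using a b by simp
  qed
  from connected_finite_iff_sing[OF c] fs obtain a where "sphere (0::real^3) 1 = {a}"
    using a1 by auto
  then show False using a1 ne by auto
qed

lemma sc_sph_punct:
  fixes X :: "(real^3) set"
  assumes "X homeomorphic sphere (0::real^3) 1" "q \<in> X"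
  shows "simply_connected (X - {q})" "locally path_connected (X - {q})"
proof -
  obtain h k where hk: "homeomorphism X (sphere (0::real^3) 1) h k" using assms homeomorphic_def by blast
  have "homeomorphism (X - {q}) (sphere 0 1 - h ` {q}) h k" by (rule homeo_diff[OF hk]) (use assms in auto)
  then have 1: "(X - {q}) homeomorphic (sphere 0 1 - {h q})" using homeomorphic_def by auto
  have "h q \<in> sphere 0 1" using hk assms by (auto simp: homeomorphism_def)
  then have 2: "(sphere 0 1 - {h q}) homeomorphic H3" by (rule punct_sphere_H3)
  have hh: "(X - {q}) homeomorphic H3" using homeomorphic_trans[OF 1 2] .
  show "simply_connected (X - {q})"
    using homeomorphic_simply_connected_eq[OF hh] convex_imp_simply_connected[OF H3_props(1)] by simp
  have "locally path_connected H3" by (rule convex_imp_locally_path_connected[OF H3_props(1)])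
  moreover have "locally path_connected (X - {q}) \<longleftrightarrow> locally path_connected H3"
    by (rule homeomorphic_locally[OF hh]) (rule homeomorphic_path_connectedness)
  ultimately show "locally path_connected (X - {q})" by simp
qed

lemma finite_compact_discrete:
  fixes K :: "'a::metric_space set"
  assumes "compact K" "\<And>x. x \<in> K \<Longrightarrow> \<exists>Op. open Op \<and> x \<in> Op \<and> K \<inter> Op \<subseteq> {x}"
  shows "finite K"
proof -
  obtain Op where Op: "\<And>x. x \<in> K \<Longrightarrow> open (Op x) \<and> x \<in> Op x \<and> K \<inter> Op x \<subseteq> {x}"
    using assms(2) by metis
  obtain D where D: "D \<subseteq> K" "finite D" "K \<subseteq> (\<Union>c\<in>D. Op c)"
    by (rule compactE_image[OF assms(1), of K Op]) (use Op in auto)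
  have "K \<subseteq> D"
  proof
    fix z assume "z \<in> K"
    then obtain c where "c \<in> D" "z \<in> Op c" using D by blast
    then have "z \<in> K \<inter> Op c" using \<open>z \<in> K\<close> by blast
    then have "z = c" using Op[of c] D(1) \<open>c \<in> D\<close> by blast
    then show "z \<in> D" using \<open>c \<in> D\<close> by simp
  qed
  then show ?thesis using D(2) finite_subset by blast
qed

lemma proper_lh_covering:
  fixes f :: "real^3 \<Rightarrow> real^3"
  assumes cS: "compact S" and cf: "continuous_on S f" and fS: "f ` S = T"
    and T0T: "T0 \<subseteq> T" and oT0: "openin (top_of_set T) T0"
    and loc: "\<And>x. x \<in> S \<Longrightarrow> f x \<in> T0 \<Longrightarrow> \<exists>U W g. openin (top_of_set S) U \<and> x \<in> U \<and>
                      openin (top_of_set T) W \<and> homeomorphism U W f g"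
  shows "covering_space (S \<inter> f -` T0) f T0"
proof (rule covering_spaceI)
  show "continuous_on (S \<inter> f -` T0) f" using cf by (rule continuous_on_subset) auto
  show "f ` (S \<inter> f -` T0) = T0" using fS T0T by auto
  fix y assume yT0: "y \<in> T0"
  define Fy where "Fy = S \<inter> f -` {y}"
  obtain U W g where UWg: "\<And>x. x \<in> Fy \<Longrightarrow> openin (top_of_set S) (U x) \<and> x \<in> U x \<and>
                      openin (top_of_set T) (W x) \<and> homeomorphism (U x) (W x) f (g x)"
    using loc yT0 unfolding Fy_def by (simp) metis
  have injU: "\<And>x a b. x \<in> Fy \<Longrightarrow> a \<in> U x \<Longrightarrow> b \<in> U x \<Longrightarrow> f a = f b \<Longrightarrow> a = b"
    using UWg by (metis homeomorphism_apply1)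
  have USsub: "\<And>x. x \<in> Fy \<Longrightarrow> U x \<subseteq> S" using UWg openin_subset by fastforce
  have cFy: "compact Fy"
  proof -
    have "closedin (top_of_set S) {x \<in> S. f x = y}" by (rule continuous_closedin_preimage_constant[OF cf])
    moreover have "{x \<in> S. f x = y} = Fy" unfolding Fy_def by auto
    ultimately show ?thesis using closedin_compact[OF cS] by auto
  qed
  have finFy: "finite Fy"
  proof (rule finite_compact_discrete[OF cFy])
    fix x assume x: "x \<in> Fy"
    obtain Op where Op: "open Op" "U x = S \<inter> Op" using UWg[OF x] openin_open by metis
    have "Fy \<inter> Op \<subseteq> {x}"
    proof
      fix z assume z: "z \<in> Fy \<inter> Op"
      then have "z \<in> U x" using Op Fy_def by auto
      moreover have "f z = f x" using z x Fy_def by auto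
      ultimately show "z \<in> {x}" using injU[OF x] UWg[OF x] by blast
    qed
    then show "\<exists>Op. open Op \<and> x \<in> Op \<and> Fy \<inter> Op \<subseteq> {x}" using Op UWg[OF x] by blast
  qed
  define r where "r = (if \<exists>a\<in>Fy. \<exists>b\<in>Fy. a \<noteq> b then Min {dist a b | a b. a \<in> Fy \<and> b \<in> Fy \<and> a \<noteq> b} / 2 else 1)"
  have rpos: "r > 0"
  proof (cases "\<exists>a\<in>Fy. \<exists>b\<in>Fy. a \<noteq> b")
    case True
    have fin: "finite {dist a b | a b. a \<in> Fy \<and> b \<in> Fy \<and> a \<noteq> b}"
    proof -
      have "{dist a b | a b. a \<in> Fy \<and> b \<in> Fy \<and> a \<noteq> b} \<subseteq> (\<lambda>(a,b). dist a b) ` (Fy \<times> Fy)" by auto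
      then show ?thesis using finFy finite_subset by blast
    qed
    have "Min {dist a b | a b. a \<in> Fy \<and> b \<in> Fy \<and> a \<noteq> b} > 0"
      using fin True by (subst Min_gr_iff) auto
    then show ?thesis using True r_def by simp
  qed (simp add: r_def)
  have rle: "\<And>a b. a \<in> Fy \<Longrightarrow> b \<in> Fy \<Longrightarrow> a \<noteq> b \<Longrightarrow> 2 * r \<le> dist a b"
  proof -
    fix a b assume ab: "a \<in> Fy" "b \<in> Fy" "a \<noteq> b"
    have fin: "finite {dist a b | a b. a \<in> Fy \<and> b \<in> Fy \<and> a \<noteq> b}"
    proof -
      have "{dist a b | a b. a \<in> Fy \<and> b \<in> Fy \<and> a \<noteq> b} \<subseteq> (\<lambda>(a,b). dist a b) ` (Fy \<times> Fy)" by auto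
      then show ?thesis using finFy finite_subset by blast
    qed
    have "Min {dist a b | a b. a \<in> Fy \<and> b \<in> Fy \<and> a \<noteq> b} \<le> dist a b"
      using ab fin by (intro Min_le) auto
    then show "2 * r \<le> dist a b" using ab r_def by auto
  qed
  define U' where "U' x = U x \<inter> ball x r" for x
  have U'disj: "\<And>a b. a \<in> Fy \<Longrightarrow> b \<in> Fy \<Longrightarrow> a \<noteq> b \<Longrightarrow> U' a \<inter> U' b = {}"
  proof -
    fix a b assume ab: "a \<in> Fy" "b \<in> Fy" "a \<noteq> b"
    show "U' a \<inter> U' b = {}"
    proof (rule ccontr)
      assume "U' a \<inter> U' b \<noteq> {}"
      then obtain z where "dist a z < r" "dist b z < r" unfolding U'_def by auto
      then have "dist a b < 2 * r" by (smt (verit) dist_commute dist_triangle)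
      then show False using rle[OF ab] by simp
    qed
  qed
  have oU': "\<And>x. x \<in> Fy \<Longrightarrow> openin (top_of_set S) (U' x)"
    unfolding U'_def using UWg by (auto intro: openin_Int_open)
  have xU': "\<And>x. x \<in> Fy \<Longrightarrow> x \<in> U' x" unfolding U'_def using UWg rpos by auto
  have U'U: "\<And>x. U' x \<subseteq> U x" unfolding U'_def by auto
  define K where "K = S - (\<Union>x\<in>Fy. U' x)"
  have cK: "compact K"
  proof -
    have "openin (top_of_set S) (\<Union>x\<in>Fy. U' x)" using oU' by blast
    then have "closedin (top_of_set S) K" unfolding K_def by (simp add: closedin_diff)
    then show ?thesis using closedin_compact[OF cS] by blast
  qed
  have clfK: "closed (f ` K)"
    by (rule compact_imp_closed, rule compact_continuous_image[OF _ cK])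
       (rule continuous_on_subset[OF cf], auto simp: K_def)
  have yfK: "y \<notin> f ` K"
  proof
    assume "y \<in> f ` K"
    then obtain z where "z \<in> K" "f z = y" by blast
    then have "z \<in> Fy" unfolding K_def Fy_def by auto
    then show False using \<open>z \<in> K\<close> xU' unfolding K_def by blast
  qed
  have yS: "y \<in> T" using yT0 T0T by blast
  then obtain x0 where x0: "x0 \<in> Fy" using fS Fy_def by force
  define Wy where "Wy = (T0 \<inter> (\<Inter>x\<in>Fy. f ` U' x)) - f ` K"
  have ofU': "\<And>x. x \<in> Fy \<Longrightarrow> openin (top_of_set T) (f ` U' x)"
  proof -
    fix x assume x: "x \<in> Fy"
    have "openin (top_of_set (U x)) (U' x)"
      using oU'[OF x] U'U by (meson openin_subset_trans USsub[OF x])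
    then have "openin (top_of_set (W x)) (f ` U' x)"
      using homeomorphism_imp_open_map UWg[OF x] by blast
    then show "openin (top_of_set T) (f ` U' x)" using UWg[OF x] openin_trans by blast
  qed
  have oWyT: "openin (top_of_set T) Wy"
  proof -
    have "openin (top_of_set T) (\<Inter>x\<in>Fy. f ` U' x)"
      using ofU' finFy x0 by (intro openin_INT2) auto
    then have "openin (top_of_set T) (T0 \<inter> (\<Inter>x\<in>Fy. f ` U' x))" using oT0 by blast
    moreover have "closedin (top_of_set T) (f ` K)"
      using clfK closedin_closed_Int[OF clfK, of T] fS K_def by (metis Int_absorb1 image_mono Diff_subset)
    ultimately show ?thesis unfolding Wy_def by blast
  qed
  have WyT0: "Wy \<subseteq> T0" unfolding Wy_def by auto
  show "\<exists>Tn. y \<in> Tn \<and> openin (top_of_set T0) Tn \<and>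
           (\<exists>v. \<Union>v = (S \<inter> f -` T0) \<inter> f -` Tn \<and> (\<forall>u\<in>v. openin (top_of_set (S \<inter> f -` T0)) u) \<and>
                pairwise disjnt v \<and> (\<forall>u\<in>v. \<exists>q. homeomorphism u Tn f q))"
  proof (intro exI conjI)
    show "y \<in> Wy" unfolding Wy_def using yT0 yfK xU' Fy_def by auto
    show "openin (top_of_set T0) Wy" using oWyT WyT0 T0T openin_subset_trans by blast
    let ?v = "(\<lambda>x. U' x \<inter> f -` Wy) ` Fy"
    show "\<Union>?v = (S \<inter> f -` T0) \<inter> f -` Wy"
    proof
      show "\<Union>?v \<subseteq> (S \<inter> f -` T0) \<inter> f -` Wy" using U'U USsub WyT0 by blast
      show "(S \<inter> f -` T0) \<inter> f -` Wy \<subseteq> \<Union>?v"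
      proof
        fix z assume z: "z \<in> (S \<inter> f -` T0) \<inter> f -` Wy"
        then have "f z \<notin> f ` K" unfolding Wy_def by auto
        then have "z \<notin> K" by blast
        then obtain x where "x \<in> Fy" "z \<in> U' x" using z unfolding K_def by blast
        then show "z \<in> \<Union>?v" using z by blast
      qed
    qed
    have oSWy: "openin (top_of_set S) (S \<inter> f -` Wy)"
      using continuous_openin_preimage[OF cf _ oWyT] fS by blast
    show "\<forall>u\<in>?v. openin (top_of_set (S \<inter> f -` T0)) u"
    proof
      fix u assume "u \<in> ?v"
      then obtain x where x: "x \<in> Fy" "u = U' x \<inter> f -` Wy" by blast
      have "u = U' x \<inter> (S \<inter> f -` Wy)" using x USsub U'U by blast
      then have "openin (top_of_set S) u" using oU'[OF x(1)] oSWy by blast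
      moreover have "u \<subseteq> S \<inter> f -` T0" using x WyT0 USsub U'U by blast
      ultimately show "openin (top_of_set (S \<inter> f -` T0)) u"
        using openin_subset_trans by blast
    qed
    show "pairwise disjnt ?v"
    proof (rule pairwiseI)
      fix u1 u2 assume "u1 \<in> ?v" "u2 \<in> ?v" "u1 \<noteq> u2"
      then obtain a b where "a \<in> Fy" "b \<in> Fy" "u1 = U' a \<inter> f -` Wy" "u2 = U' b \<inter> f -` Wy" "a \<noteq> b"
        by blast
      then show "disjnt u1 u2" using U'disj unfolding disjnt_def by blast
    qed
    show "\<forall>u\<in>?v. \<exists>q. homeomorphism u Wy f q"
    proof
      fix u assume "u \<in> ?v"
      then obtain x where x: "x \<in> Fy" "u = U' x \<inter> f -` Wy" by blast
      have "f ` u = Wy"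
      proof
        show "f ` u \<subseteq> Wy" using x by auto
        show "Wy \<subseteq> f ` u"
        proof
          fix w assume w: "w \<in> Wy"
          then have "w \<in> f ` U' x" unfolding Wy_def using x by blast
          then obtain z where "z \<in> U' x" "w = f z" by blast
          then show "w \<in> f ` u" using w x by blast
        qed
      qed
      moreover have "u \<subseteq> U x" using x U'U by blast
      ultimately have "homeomorphism u Wy f (g x)"
        using homeomorphism_of_subsets[OF conjunct2[OF conjunct2[OF conjunct2[OF UWg[OF x(1)]]]]] by blast
      then show "\<exists>q. homeomorphism u Wy f q" by blast
    qed
  qed
qed

lemma key_inj:
  fixes f :: "real^3 \<Rightarrow> real^3"
  assumes hS: "S homeomorphic sphere (0::real^3) 1" and hT: "T homeomorphic sphere (0::real^3) 1"
    and cf: "continuous_on S f" and fS: "f ` S = T" and qT: "q \<in> T"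
    and finq: "finite (S \<inter> f -` {q})"
    and loc: "\<And>x. x \<in> S \<Longrightarrow> f x \<noteq> q \<Longrightarrow> \<exists>U W g. openin (top_of_set S) U \<and> x \<in> U \<and>
                      openin (top_of_set T) W \<and> homeomorphism U W f g"
  shows "inj_on f (S - f -` {q})"
proof -
  define T0 where "T0 = T - {q}"
  define S' where "S' = S - f -` {q}"
  have cS: "compact S" using hS homeomorphic_compactness compact_sphere by blast
  have oT0: "openin (top_of_set T) T0" unfolding T0_def Diff_eq by (rule openin_open_Int) auto
  have SS': "S \<inter> f -` T0 = S'" unfolding T0_def S'_def using fS by auto
  have cov: "covering_space S' f T0"
    using proper_lh_covering[OF cS cf fS _ oT0] loc SS' unfolding T0_def by auto
  have conS': "connected S'"
  proof -
    have "S' = S - (S \<inter> f -` {q})" unfolding S'_def by auto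
    then show ?thesis using connected_sph_minus_finite[OF hS finq] by simp
  qed
  have sc: "simply_connected T0" and lpc: "locally path_connected T0"
    unfolding T0_def using sc_sph_punct[OF hT qT] by auto
  have cfS': "continuous_on S' f" using cf by (rule continuous_on_subset) (auto simp: S'_def)
  have fS': "f \<in> S' \<rightarrow> T0" using fS unfolding S'_def T0_def by auto
  show ?thesis
  proof (rule inj_onI)
    fix x1 x2 assume x1: "x1 \<in> S - f -` {q}" and x2: "x2 \<in> S - f -` {q}" and eq: "f x1 = f x2"
    have x1S': "x1 \<in> S'" and x2S': "x2 \<in> S'" using x1 x2 S'_def by auto
    have fx1: "f x1 \<in> T0" using fS' x1S' by auto
    obtain g where cg: "continuous_on T0 g" and gT0: "g \<in> T0 \<rightarrow> S'" and g1: "g (f x1) = x1"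
      and fg: "\<And>y. y \<in> T0 \<Longrightarrow> f (g y) = id y"
      by (rule covering_space_lift_strong[OF cov x1S' fx1 sc lpc continuous_on_id]) auto
    define E where "E = {x \<in> S'. g (f x) = x}"
    have cgf: "continuous_on S' (\<lambda>x. g (f x))"
      using continuous_on_compose2[OF cg cfS'] fS' by auto
    have clE: "closedin (top_of_set S') E"
    proof -
      have "closedin (top_of_set S') {x \<in> S'. (\<lambda>x. g (f x) - x) x = 0}"
        by (rule continuous_closedin_preimage_constant) (intro continuous_intros cgf)
      moreover have "{x \<in> S'. (\<lambda>x. g (f x) - x) x = 0} = E" unfolding E_def by auto
      ultimately show ?thesis by simp
    qed
    have opE: "openin (top_of_set S') E"
    proof (subst openin_subopen, intro ballI)
      fix x assume xE: "x \<in> E"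
      then have xS': "x \<in> S'" and gx: "g (f x) = x" unfolding E_def by auto
      then have xS: "x \<in> S" and fxq: "f x \<noteq> q" unfolding S'_def by auto
      obtain U W h where oU: "openin (top_of_set S) U" and xU: "x \<in> U" and hom: "homeomorphism U W f h"
        using loc[OF xS fxq] by blast
      have injU: "\<And>a b. a \<in> U \<Longrightarrow> b \<in> U \<Longrightarrow> f a = f b \<Longrightarrow> a = b"
        using hom by (metis homeomorphism_apply1)
      obtain Op where Op: "open Op" "U = S \<inter> Op" using oU openin_open by metis
      have oUS': "openin (top_of_set S') (S' \<inter> Op)" using Op(1) by blast
      have oV: "openin (top_of_set T0) (T0 \<inter> g -` (S' \<inter> Op))"
        by (rule continuous_openin_preimage[OF cg gT0 oUS'])
      have oN: "openin (top_of_set S') (S' \<inter> f -` (T0 \<inter> g -` (S' \<inter> Op)))"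
        by (rule continuous_openin_preimage[OF cfS' fS' oV])
      let ?N = "(S' \<inter> Op) \<inter> (S' \<inter> f -` (T0 \<inter> g -` (S' \<inter> Op)))"
      show "\<exists>N. openin (top_of_set S') N \<and> x \<in> N \<and> N \<subseteq> E"
      proof (intro exI conjI)
        show "openin (top_of_set S') ?N" using oUS' oN by blast
        show "x \<in> ?N" using xS' xU Op fS' gx by auto
        show "?N \<subseteq> E"
        proof
          fix z assume z: "z \<in> ?N"
          then have zU: "z \<in> U" and zS': "z \<in> S'" using Op S'_def by auto
          have fzT0: "f z \<in> T0" using z by auto
          have gU: "g (f z) \<in> U" using z Op S'_def by auto
          have "f (g (f z)) = f z" using fg[OF fzT0] by simp
          then have "g (f z) = z" using injU[OF gU zU] by simp
          then show "z \<in> E" using zS' E_def by simp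
        qed
      qed
    qed
    have xE1: "x1 \<in> E" using x1S' g1 E_def by simp
    have "E = S'"
      using conS' clE opE xE1 unfolding connected_clopen by blast
    then have "g (f x2) = x2" using x2S' E_def by blast
    then show "x1 = x2" using g1 eq by simp
  qed
qed

lemma homeo_inj: "homeomorphism S T f g \<Longrightarrow> inj_on f S"
proof (rule inj_onI)
  fix x y assume h: "homeomorphism S T f g" and xy: "x \<in> S" "y \<in> S" "f x = f y"
  have "x = g (f x)" by (rule sym, rule homeomorphism_apply1[OF h xy(1)])
  also have "\<dots> = g (f y)" using xy(3) by (rule arg_cong)
  also have "\<dots> = y" by (rule homeomorphism_apply1[OF h xy(2)])
  finally show "x = y" .
qed

lemma homeo_inj2: "homeomorphism S T f g \<Longrightarrow> inj_on g T"
  by (rule homeo_inj, erule homeomorphism_symD)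

lemma branched_atE:
  assumes "branched_at S T f p d"
  obtains U W \<phi> \<phi>' \<psi> \<psi>' where "openin (top_of_set S) U" "p \<in> U" "openin (top_of_set T) W"
    "f ` U = W" "homeomorphism U (ball (0::complex) 1) \<phi> \<phi>'" "homeomorphism W (ball (0::complex) 1) \<psi> \<psi>'"
    "\<phi> p = 0" "\<psi> (f p) = 0" "\<forall>x\<in>U. \<psi> (f x) = (\<phi> x) ^ d"
  using assms unfolding branched_at_def
  apply (elim exE conjE)
  apply (rule that)
  apply assumption+
  done

lemma chart_upper:
  assumes "branched_at S T f p d" "d > 0"
  shows "\<exists>U. openin (top_of_set S) U \<and> p \<in> U \<and>
           (\<forall>y. finite (U \<inter> f -` {y}) \<and> card (U \<inter> f -` {y}) \<le> d)"
proof -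
  obtain U W \<phi> \<phi>' \<psi> \<psi>' where oU: "openin (top_of_set S) U" and pU: "p \<in> U"
    and oW: "openin (top_of_set T) W"
    and fU: "f ` U = W" and h1: "homeomorphism U (ball (0::complex) 1) \<phi> \<phi>'"
    and h2: "homeomorphism W (ball (0::complex) 1) \<psi> \<psi>'"
    and p0: "\<phi> p = 0" and fp0: "\<psi> (f p) = 0"
    and eq: "\<forall>x\<in>U. \<psi> (f x) = (\<phi> x) ^ d"
    by (rule branched_atE[OF assms(1)])
  have injphi: "inj_on \<phi> U" using h1 by (rule homeo_inj)
  have "finite (U \<inter> f -` {y}) \<and> card (U \<inter> f -` {y}) \<le> d" for y
  proof -
    let ?R = "{z::complex. z ^ d = \<psi> y}"
    have sub: "\<phi> ` (U \<inter> f -` {y}) \<subseteq> ?R" using eq by auto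
    have finR: "finite ?R" using assms(2) by (rule finite_nth_roots)
    have cardR: "card ?R \<le> d"
    proof (cases "\<psi> y = 0")
      case True
      then have "?R = {0}" using assms(2) by auto
      then show ?thesis using assms(2) by simp
    next
      case False
      then show ?thesis using card_nth_roots[OF False assms(2)] by simp
    qed
    have inj2: "inj_on \<phi> (U \<inter> f -` {y})" using injphi by (rule inj_on_subset) auto
    have fin: "finite (U \<inter> f -` {y})"
      using finite_imageD[OF finite_subset[OF sub finR] inj2] .
    have "card (U \<inter> f -` {y}) = card (\<phi> ` (U \<inter> f -` {y}))" using card_image[OF inj2] by simp
    also have "\<dots> \<le> card ?R" using card_mono[OF finR sub] .
    finally show ?thesis using fin cardR by simp
  qed
  then show ?thesis using oU pU by blast
qed

lemma chart_lower:
  assumes "branched_at S T f p d" "d > 0" "openin (top_of_set S) V" "p \<in> V" "finite B"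
  shows "\<exists>y\<in>T. y \<notin> B \<and> y \<noteq> f p \<and> (\<exists>A. A \<subseteq> V \<inter> S \<inter> f -` {y} \<and> finite A \<and> card A = d)"
proof -
  obtain U W \<phi> \<phi>' \<psi> \<psi>' where oU: "openin (top_of_set S) U" and pU: "p \<in> U"
    and oW: "openin (top_of_set T) W"
    and fU: "f ` U = W" and h1: "homeomorphism U (ball (0::complex) 1) \<phi> \<phi>'"
    and h2: "homeomorphism W (ball (0::complex) 1) \<psi> \<psi>'"
    and p0: "\<phi> p = 0" and fp0: "\<psi> (f p) = 0"
    and eq: "\<forall>x\<in>U. \<psi> (f x) = (\<phi> x) ^ d"
    by (rule branched_atE[OF assms(1)])
  have US: "U \<subseteq> S" using oU openin_subset by fastforce
  have WT: "W \<subseteq> T" using oW openin_subset by fastforce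
  obtain Ov where Ov: "open Ov" "V = S \<inter> Ov" using assms(3) openin_open by metis
  have UV: "U \<inter> V = U \<inter> Ov" using US Ov(2) by blast
  have "openin (top_of_set U) (U \<inter> V)" unfolding UV using Ov(1) by (rule openin_open_Int)
  then have "openin (top_of_set (ball 0 1)) (\<phi> ` (U \<inter> V))"
    using homeomorphism_imp_open_map[OF h1] by blast
  then have oO: "open (\<phi> ` (U \<inter> V))" using openin_open_trans open_ball by blast
  have "\<phi> p \<in> \<phi> ` (U \<inter> V)" using pU assms(4) by blast
  then have "0 \<in> \<phi> ` (U \<inter> V)" using p0 by simp
  then obtain r0 where r0: "r0 > 0" "ball 0 r0 \<subseteq> \<phi> ` (U \<inter> V)" using oO open_contains_ball by blast
  define r where "r = min r0 1"
  have r: "r > 0" "r \<le> 1" "ball 0 r \<subseteq> \<phi> ` (U \<inter> V)" using r0 unfolding r_def by auto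
  have rd: "r ^ d > 0" using r by simp
  have inj\<psi>': "inj_on \<psi>' (ball 0 1)" using h2 by (rule homeo_inj2)
  have "r ^ d \<le> 1" using r by (simp add: power_le_one)
  then have bsub: "ball (0::complex) (r ^ d) \<subseteq> ball 0 1" by (rule subset_ball)
  let ?C = "ball (0::complex) (r ^ d) - {0}"
  have "infinite (ball (0::complex) (r ^ d))" using uncountable_ball[OF rd, of "0::complex"] countable_finite by blast
  then have infC: "infinite ?C" by simp
  have inj2: "inj_on \<psi>' ?C" using inj\<psi>' by (rule inj_on_subset) (use bsub in blast)
  have "infinite (\<psi>' ` ?C)" using infC finite_imageD[OF _ inj2] by blast
  then have "infinite (\<psi>' ` ?C - insert (f p) B)" using assms(5) Diff_infinite_finite by blast
  then obtain y' where "y' \<in> \<psi>' ` ?C - insert (f p) B" using infinite_imp_nonempty by blast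
  then obtain c where c: "c \<in> ?C" "\<psi>' c \<notin> insert (f p) B" by blast
  have cball: "c \<in> ball 0 1" using c bsub by blast
  define y where "y = \<psi>' c"
  have yW: "y \<in> W" using homeomorphism_image2[OF h2] cball unfolding y_def by blast
  let ?R = "{z::complex. z ^ d = c}"
  have c0: "c \<noteq> 0" using c by simp
  have cardR: "card ?R = d" using card_nth_roots[OF c0 assms(2)] .
  have Rr: "?R \<subseteq> ball 0 r"
  proof
    fix z assume "z \<in> ?R"
    then have "norm z ^ d = norm c" using norm_power[of z d] by simp
    moreover have "norm c < r ^ d" using c by simp
    ultimately have "norm z ^ d < r ^ d" by simp
    then show "z \<in> ball 0 r" using power_less_imp_less_base[of "norm z" d r] r by simp
  qed
  have inj\<phi>': "inj_on \<phi>' (ball 0 1)" using h1 by (rule homeo_inj2)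
  have Rball: "?R \<subseteq> ball 0 1" using Rr r by auto
  define A where "A = \<phi>' ` ?R"
  have cardA: "card A = d" unfolding A_def using card_image[OF inj_on_subset[OF inj\<phi>' Rball]] cardR by simp
  have finA: "finite A" unfolding A_def using finite_nth_roots[OF assms(2)] by blast
  have AV: "A \<subseteq> V \<inter> S \<inter> f -` {y}"
  proof
    fix a assume "a \<in> A"
    then obtain z where z: "z \<in> ?R" "a = \<phi>' z" unfolding A_def by blast
    have zr: "z \<in> ball 0 r" using z Rr by blast
    then obtain u where u: "u \<in> U \<inter> V" "z = \<phi> u" using r(3) by blast
    have au: "a = u" using z u homeomorphism_apply1[OF h1, of u] by simp
    have "\<psi> (f u) = c" using eq u z by auto
    moreover have "f u \<in> W" using fU u by blast
    ultimately have "f u = y" unfolding y_def using homeomorphism_apply1[OF h2, of "f u"] by simp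
    then show "a \<in> V \<inter> S \<inter> f -` {y}" using au u US by auto
  qed
  show ?thesis using yW WT c AV finA cardA unfolding y_def by blast
qed

lemma chart_fibre:
  assumes "branched_at S T f p d"
  shows "\<exists>U. openin (top_of_set S) U \<and> p \<in> U \<and> U \<inter> f -` {f p} \<subseteq> {p}"
proof -
  obtain U W \<phi> \<phi>' \<psi> \<psi>' where oU: "openin (top_of_set S) U" and pU: "p \<in> U"
    and oW: "openin (top_of_set T) W"
    and fU: "f ` U = W" and h1: "homeomorphism U (ball (0::complex) 1) \<phi> \<phi>'"
    and h2: "homeomorphism W (ball (0::complex) 1) \<psi> \<psi>'"
    and p0: "\<phi> p = 0" and fp0: "\<psi> (f p) = 0"
    and eq: "\<forall>x\<in>U. \<psi> (f x) = (\<phi> x) ^ d"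
    by (rule branched_atE[OF assms(1)])
  have "U \<inter> f -` {f p} \<subseteq> {p}"
  proof
    fix x assume x: "x \<in> U \<inter> f -` {f p}"
    then have "(\<phi> x) ^ d = 0" using eq fp0 by force
    then have "\<phi> x = 0" by simp
    then have "\<phi> x = \<phi> p" using p0 by simp
    have xU: "x \<in> U" using x by blast
    have "x = \<phi>' (\<phi> x)" by (rule sym, rule homeomorphism_apply1[OF h1 xU])
    also have "\<dots> = \<phi>' (\<phi> p)" using \<open>\<phi> x = \<phi> p\<close> by (rule arg_cong)
    also have "\<dots> = p" by (rule homeomorphism_apply1[OF h1 pU])
    finally show "x \<in> {p}" by simp
  qed
  then show ?thesis using oU pU by blast
qed

lemma branched_unique:
  assumes "branched_at S T f p d" "d > 0" "branched_at S T f p e" "e > 0"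
  shows "d = e"
proof -
  have le: "d \<le> e" if H: "branched_at S T f p d" "d > 0" "branched_at S T f p e" "e > 0" for d e
  proof -
    obtain U where U: "openin (top_of_set S) U" "p \<in> U" "\<forall>y. finite (U \<inter> f -` {y}) \<and> card (U \<inter> f -` {y}) \<le> e"
      using chart_upper[OF H(3,4)] by blast
    obtain y A where "A \<subseteq> U \<inter> S \<inter> f -` {y}" "finite A" "card A = d"
      using chart_lower[OF H(1,2) U(1,2), of "{}"] by blast
    then have "A \<subseteq> U \<inter> f -` {y}" by blast
    then have "card A \<le> card (U \<inter> f -` {y})" using U(3) card_mono by blast
    then have "d \<le> card (U \<inter> f -` {y})" using \<open>card A = d\<close> by simp
    then show ?thesis using U(3) by (meson order_trans)
  qed
  show ?thesis using le[OF assms] le[OF assms(3,4,1,2)] by simp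
qed

lemma local_degree_props:
  assumes "branched_covering S T f" "p \<in> S"
  shows "branched_at S T f p (local_degree S T f p) \<and> local_degree S T f p > 0"
proof -
  obtain d where d: "d > 0" "branched_at S T f p d" using assms unfolding branched_covering_def by blast
  have "\<exists>!d. 0 < d \<and> branched_at S T f p d" using d branched_unique by blast
  then have "0 < local_degree S T f p \<and> branched_at S T f p (local_degree S T f p)"
    unfolding local_degree_def by (rule theI')
  then show ?thesis by simp
qed

lemma local_degree_eq:
  assumes "branched_at S T f p d" "d > 0" "branched_covering S T f" "p \<in> S"
  shows "local_degree S T f p = d"
  using local_degree_props[OF assms(3,4)] branched_unique assms(1,2) by blast

definition sm :: "(real^3) set \<Rightarrow> (real^3) set \<Rightarrow> (real^3 \<Rightarrow> real^3) \<Rightarrow> (real^3) set \<Rightarrow> (real^3) set \<Rightarrow> bool" where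
  "sm S T f M N \<longleftrightarrow> S homeomorphic sphere (0::real^3) 1 \<and> T homeomorphic sphere (0::real^3) 1 \<and>
     branched_covering S T f \<and> covering_space (S - M) f (T - N) \<and> finite M \<and> finite N \<and> M \<subseteq> S \<and> f ` M \<subseteq> N"

lemma locally_const_connected:
  assumes "connected X" "x0 \<in> X"
    and loc: "\<And>x. x \<in> X \<Longrightarrow> \<exists>U. openin (top_of_set X) U \<and> x \<in> U \<and> (\<forall>y\<in>U. c y = c x)"
  shows "\<forall>x\<in>X. c x = c x0"
proof -
  define E where "E = {x \<in> X. c x = c x0}"
  have oE: "openin (top_of_set X) E"
  proof (subst openin_subopen, intro ballI)
    fix x assume "x \<in> E"
    then have x: "x \<in> X" "c x = c x0" unfolding E_def by auto
    obtain U where U: "openin (top_of_set X) U" "x \<in> U" "\<forall>y\<in>U. c y = c x" using loc[OF x(1)] by blast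
    have "U \<subseteq> X" using U(1) openin_subset by fastforce
    then have "U \<subseteq> E" using U(3) x(2) unfolding E_def by auto
    then show "\<exists>T. openin (top_of_set X) T \<and> x \<in> T \<and> T \<subseteq> E" using U by blast
  qed
  have oE': "openin (top_of_set X) (X - E)"
  proof (subst openin_subopen, intro ballI)
    fix x assume "x \<in> X - E"
    then have x: "x \<in> X" "c x \<noteq> c x0" unfolding E_def by auto
    obtain U where U: "openin (top_of_set X) U" "x \<in> U" "\<forall>y\<in>U. c y = c x" using loc[OF x(1)] by blast
    have "U \<subseteq> X" using U(1) openin_subset by fastforce
    then have "U \<subseteq> X - E" using U(3) x(2) unfolding E_def by auto
    then show "\<exists>T. openin (top_of_set X) T \<and> x \<in> T \<and> T \<subseteq> X - E" using U by blast
  qed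
  have cE: "closedin (top_of_set X) E"
    unfolding closedin_def using oE' E_def by auto
  have "E = {} \<or> E = X" using assms(1) oE cE unfolding connected_clopen by blast
  moreover have "x0 \<in> E" using assms(2) E_def by simp
  ultimately have "E = X" by blast
  then show ?thesis unfolding E_def by blast
qed

lemma sm_compact: "sm S T f M N \<Longrightarrow> compact S"
  unfolding sm_def using homeomorphic_compactness compact_sphere by blast

lemma sm_cont: "sm S T f M N \<Longrightarrow> continuous_on S f"
  unfolding sm_def branched_covering_def by blast

lemma sm_onto: "sm S T f M N \<Longrightarrow> f ` S = T"
  unfolding sm_def branched_covering_def by blast

lemma sm_bc: "sm S T f M N \<Longrightarrow> branched_covering S T f"
  unfolding sm_def by blast

lemma sm_fibre_finite:
  assumes sm: "sm S T f M N"
  shows "finite (S \<inter> f -` {y})"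
proof (rule finite_compact_discrete)
  have "closedin (top_of_set S) {x \<in> S. f x = y}" by (rule continuous_closedin_preimage_constant[OF sm_cont[OF sm]])
  moreover have "{x \<in> S. f x = y} = S \<inter> f -` {y}" by auto
  ultimately show "compact (S \<inter> f -` {y})" using closedin_compact[OF sm_compact[OF sm]] by auto
  fix x assume x: "x \<in> S \<inter> f -` {y}"
  have xS: "x \<in> S" using x by blast
  have bx: "branched_at S T f x (local_degree S T f x)" using local_degree_props[OF sm_bc[OF sm] xS] by blast
  obtain U where U: "openin (top_of_set S) U" "x \<in> U" "U \<inter> f -` {f x} \<subseteq> {x}"
    using chart_fibre[OF bx] by blast
  obtain Op where Op: "open Op" "U = S \<inter> Op" using U(1) openin_open by metis
  have "f x = y" using x by simp
  then have "S \<inter> f -` {y} \<inter> Op \<subseteq> {x}" using U(3) Op(2) by auto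
  moreover have "x \<in> Op" using U(2) Op(2) by blast
  ultimately show "\<exists>Op. open Op \<and> x \<in> Op \<and> S \<inter> f -` {y} \<inter> Op \<subseteq> {x}" using Op(1) by blast
qed

lemma sm_preN:
  assumes sm: "sm S T f M N" "x \<in> S" "f x \<in> N"
  shows "x \<in> M"
proof (rule ccontr)
  assume "x \<notin> M"
  have "covering_space (S - M) f (T - N)" using sm(1) unfolding sm_def by blast
  then have "f ` (S - M) = T - N" by (rule covering_space_imp_surjective)
  then have "f x \<in> T - N" using \<open>x \<notin> M\<close> sm(2) by blast
  then show False using sm(3) by blast
qed

lemma sm_ld_pos:
  assumes sm: "sm S T f M N" and x: "x \<in> S"
  shows "branched_at S T f x (local_degree S T f x)" "local_degree S T f x > 0"
  using local_degree_props[OF sm_bc[OF sm] x] by auto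

lemma sm_ld_one:
  assumes sm: "sm S T f M N" and x: "x \<in> S" "x \<notin> M"
  shows "local_degree S T f x = 1"
proof (rule ccontr)
  assume ne: "local_degree S T f x \<noteq> 1"
  define d where "d = local_degree S T f x"
  have bd: "branched_at S T f x d" "d > 0" using sm_ld_pos[OF sm x(1)] d_def by auto
  then have d2: "d \<ge> 2" using ne d_def by simp
  have cov: "covering_space (S - M) f (T - N)" using sm unfolding sm_def by blast
  have xSM: "x \<in> S - M" using x by blast
  obtain Tn u q where Tn: "x \<in> Tn" "openin (top_of_set (S - M)) Tn" "homeomorphism Tn u f q"
    by (rule covering_space_local_homeomorphism[OF cov xSM])
  have finM: "finite M" using sm unfolding sm_def by blast
  have "openin (top_of_set S) (S - M)"
    unfolding Diff_eq by (rule openin_open_Int) (simp add: finM finite_imp_closed open_Compl)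
  then have oTn: "openin (top_of_set S) Tn" using Tn(2) openin_trans by blast
  obtain y A where A: "A \<subseteq> Tn \<inter> S \<inter> f -` {y}" "finite A" "card A = d"
    using chart_lower[OF bd oTn Tn(1), of "{}"] by blast
  have injTn: "inj_on f Tn" using Tn(3) by (rule homeo_inj)
  have injA: "inj_on f A" using injTn by (rule inj_on_subset) (use A(1) in blast)
  have "f ` A \<subseteq> {y}" using A(1) by blast
  then have "card (f ` A) \<le> 1" using card_mono[of "{y}" "f ` A"] by simp
  then have "card A \<le> 1" using card_image[OF injA] by simp
  then show False using A(3) d2 by simp
qed

lemma sm_loc:
  assumes sm: "sm S T f M N" and x: "x \<in> S" and ld: "local_degree S T f x = 1"
  shows "\<exists>U W g. openin (top_of_set S) U \<and> x \<in> U \<and> openin (top_of_set T) W \<and> homeomorphism U W f g"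
proof -
  have "branched_at S T f x 1" using sm_ld_pos[OF sm x] ld by simp
  then obtain U W \<phi> \<phi>' \<psi> \<psi>' where oU: "openin (top_of_set S) U" and pU: "x \<in> U"
    and oW: "openin (top_of_set T) W"
    and fU: "f ` U = W" and h1: "homeomorphism U (ball (0::complex) 1) \<phi> \<phi>'"
    and h2: "homeomorphism W (ball (0::complex) 1) \<psi> \<psi>'"
    and p0: "\<phi> x = 0" and fp0: "\<psi> (f x) = 0"
    and eq: "\<forall>x\<in>U. \<psi> (f x) = (\<phi> x) ^ 1"
    by (rule branched_atE)
  have h: "homeomorphism U W (\<psi>' \<circ> \<phi>) (\<phi>' \<circ> \<psi>)"
    by (rule homeomorphism_compose[OF h1 homeomorphism_symD[OF h2]])
  have "homeomorphism U W f (\<phi>' \<circ> \<psi>)"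
  proof (rule homeomorphism_cong[OF h])
    fix z assume z: "z \<in> U"
    have fzW: "f z \<in> W" using fU z by blast
    have "f z = \<psi>' (\<psi> (f z))" by (rule sym, rule homeomorphism_apply1[OF h2 fzW])
    also have "\<dots> = \<psi>' (\<phi> z)" using eq z by simp
    finally show "f z = (\<psi>' \<circ> \<phi>) z" by simp
  qed auto
  then show ?thesis using oU pU oW by blast
qed

lemma sm_local_card:
  assumes sm: "sm S T f M N" and y: "y \<in> T - N"
  shows "\<exists>Tn. openin (top_of_set (T - N)) Tn \<and> y \<in> Tn \<and> (\<forall>y'\<in>Tn. card (S \<inter> f -` {y'}) = card (S \<inter> f -` {y}))"
proof -
  have cov: "covering_space (S - M) f (T - N)" and fMN: "f ` M \<subseteq> N"
    using sm unfolding sm_def by blast+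
  have "\<forall>x \<in> T - N. \<exists>Tn. x \<in> Tn \<and> openin (top_of_set (T - N)) Tn \<and>
                    (\<exists>v. \<Union>v = (S - M) \<inter> f -` Tn \<and>
                        (\<forall>u \<in> v. openin (top_of_set (S - M)) u) \<and>
                        pairwise disjnt v \<and>
                        (\<forall>u \<in> v. \<exists>q. homeomorphism u Tn f q))"
    using cov unfolding covering_space_def by (elim conjE)
  from bspec[OF this y] obtain Tn v where Tn: "y \<in> Tn" "openin (top_of_set (T - N)) Tn"
    and v: "\<Union>v = (S - M) \<inter> f -` Tn" "\<forall>u \<in> v. openin (top_of_set (S - M)) u"
      "pairwise disjnt v" "\<forall>u \<in> v. \<exists>q. homeomorphism u Tn f q"
    by (elim exE conjE) (rule that; assumption)
  have TnTN: "Tn \<subseteq> T - N" using Tn(2) openin_subset by fastforce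
  have cardv: "card (S \<inter> f -` {y'}) = card v" if y': "y' \<in> Tn" for y'
  proof -
    define Fb where "Fb = S \<inter> f -` {y'}"
    define g where "g z = (SOME u. u \<in> v \<and> z \<in> u)" for z
    have inU: "\<exists>u. u \<in> v \<and> z \<in> u" if "z \<in> Fb" for z
    proof -
      have zS: "z \<in> S" and fz: "f z = y'" using that Fb_def by auto
      have "z \<notin> M"
      proof
        assume "z \<in> M" then have "f z \<in> N" using fMN by blast
        then show False using fz y' TnTN by blast
      qed
      then have "z \<in> \<Union>v" using v(1) zS fz y' by blast
      then show ?thesis by blast
    qed
    have gz: "g z \<in> v \<and> z \<in> g z" if "z \<in> Fb" for z
      unfolding g_def using someI_ex[OF inU[OF that]] .
    have disj: "u1 = u2" if "u1 \<in> v" "u2 \<in> v" "z \<in> u1" "z \<in> u2" for u1 u2 z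
      using v(3) that unfolding pairwise_def disjnt_def by blast
    have "bij_betw g Fb v"
    proof (rule bij_betw_imageI)
      show "inj_on g Fb"
      proof (rule inj_onI)
        fix z1 z2 assume z: "z1 \<in> Fb" "z2 \<in> Fb" "g z1 = g z2"
        obtain q where q: "homeomorphism (g z1) Tn f q" using v(4) gz[OF z(1)] by blast
        have "inj_on f (g z1)" using q by (rule homeo_inj)
        moreover have "z1 \<in> g z1" "z2 \<in> g z1" using gz z by auto
        moreover have "f z1 = f z2" using z Fb_def by simp
        ultimately show "z1 = z2" by (meson inj_onD)
      qed
      show "g ` Fb = v"
      proof
        show "g ` Fb \<subseteq> v" using gz by blast
        show "v \<subseteq> g ` Fb"
        proof
          fix u assume u: "u \<in> v"
          obtain q where q: "homeomorphism u Tn f q" using v(4) u by blast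
          have quy: "q y' \<in> u" using q y' unfolding homeomorphism_def by blast
          have fq: "f (q y') = y'" using q y' unfolding homeomorphism_def by blast
          have "u \<subseteq> \<Union>v" using u by blast
          then have "q y' \<in> S" using quy v(1) by blast
          then have qF: "q y' \<in> Fb" using fq Fb_def by simp
          have "g (q y') = u" using disj[OF _ u _ quy] gz[OF qF] by blast
          then show "u \<in> g ` Fb" using qF by blast
        qed
      qed
    qed
    then show ?thesis using bij_betw_same_card Fb_def by blast
  qed
  have "\<forall>y'\<in>Tn. card (S \<inter> f -` {y'}) = card (S \<inter> f -` {y})" using cardv Tn(1) by simp
  then show ?thesis using Tn by blast
qed

lemma sm_card_const:
  assumes sm: "sm S T f M N" and y: "y \<in> T - N" and y0: "y0 \<in> T - N"
  shows "card (S \<inter> f -` {y}) = card (S \<inter> f -` {y0})"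
proof -
  have hT: "T homeomorphic sphere (0::real^3) 1" and finN: "finite N" using sm unfolding sm_def by blast+
  have con: "connected (T - N)" by (rule connected_sph_minus_finite[OF hT finN])
  have "\<forall>x\<in>T - N. card (S \<inter> f -` {x}) = card (S \<inter> f -` {y0})"
  proof (rule locally_const_connected[OF con y0, where c="\<lambda>x. card (S \<inter> f -` {x})"])
    fix x assume "x \<in> T - N"
    then show "\<exists>U. openin (top_of_set (T - N)) U \<and> x \<in> U \<and> (\<forall>y\<in>U. card (S \<inter> f -` {y}) = card (S \<inter> f -` {x}))"
      by (rule sm_local_card[OF sm])
  qed
  then show ?thesis using y by blast
qed

lemma sm_bdeg:
  assumes sm: "sm S T f M N" and y0: "y0 \<in> T - N"
  shows "branched_degree S T f = card (S \<inter> f -` {y0})"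
  unfolding branched_degree_def
proof (rule the_equality)
  have finN: "finite N" using sm unfolding sm_def by blast
  show "\<exists>B. finite B \<and> (\<forall>q\<in>T - B. card (S \<inter> f -` {q}) = card (S \<inter> f -` {y0}))"
    using sm_card_const[OF sm _ y0] finN by blast
  fix n assume "\<exists>B. finite B \<and> (\<forall>q\<in>T - B. card (S \<inter> f -` {q}) = n)"
  then obtain B where B: "finite B" "\<forall>q\<in>T - B. card (S \<inter> f -` {q}) = n" by blast
  have hT: "T homeomorphic sphere (0::real^3) 1" using sm unfolding sm_def by blast
  have "infinite (T - (B \<union> N))" using infinite_sph[OF hT] B(1) finN by (simp add: Diff_infinite_finite)
  then obtain q where q: "q \<in> T - (B \<union> N)" using infinite_imp_nonempty by blast
  then have "card (S \<inter> f -` {q}) = n" using B(2) by blast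
  moreover have "card (S \<inter> f -` {q}) = card (S \<inter> f -` {y0})" using sm_card_const[OF sm _ y0] q by blast
  ultimately show "n = card (S \<inter> f -` {y0})" by simp
qed

lemma sm_exists_generic:
  assumes sm: "sm S T f M N" and F: "finite F"
  shows "\<exists>y. y \<in> T - N \<and> y \<notin> F"
proof -
  have hT: "T homeomorphic sphere (0::real^3) 1" and finN: "finite N" using sm unfolding sm_def by blast+
  have "infinite (T - (F \<union> N))" using infinite_sph[OF hT] F finN by (simp add: Diff_infinite_finite)
  then obtain q where q: "q \<in> T - (F \<union> N)" using infinite_imp_nonempty by blast
  then show ?thesis by blast
qed

lemma card_le1_inj:
  assumes "inj_on f A" "f ` A \<subseteq> {y}"
  shows "card A \<le> 1"
proof -
  have "card (f ` A) \<le> 1" using assms(2) card_mono[of "{y}" "f ` A"] by simp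
  then show ?thesis using card_image[OF assms(1)] by simp
qed

lemma sm_crit_exists:
  assumes sm: "sm S T f M N" and deg: "branched_degree S T f > 1"
  shows "\<exists>p\<in>M. local_degree S T f p > 1"
proof (rule ccontr)
  assume "\<not> (\<exists>p\<in>M. local_degree S T f p > 1)"
  then have nc: "\<And>p. p \<in> M \<Longrightarrow> \<not> local_degree S T f p > 1" by blast
  have all1: "local_degree S T f x = 1" if x: "x \<in> S" for x
  proof (cases "x \<in> M")
    case True
    then have "\<not> local_degree S T f x > 1" using nc by blast
    moreover have "local_degree S T f x > 0" using sm_ld_pos(2)[OF sm x] .
    ultimately show ?thesis by linarith
  next
    case False
    show ?thesis using sm_ld_one[OF sm x False] .
  qed
  have hS: "S homeomorphic sphere (0::real^3) 1" and hT: "T homeomorphic sphere (0::real^3) 1"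
    using sm unfolding sm_def by blast+
  obtain q where q: "q \<in> T - N" using sm_exists_generic[OF sm, of "{}"] by blast
  obtain y where y: "y \<in> T - N" "y \<notin> {q}" using sm_exists_generic[OF sm, of "{q}"] by blast
  have inj: "inj_on f (S - f -` {q})"
  proof (rule key_inj[OF hS hT sm_cont[OF sm] sm_onto[OF sm]])
    show "q \<in> T" using q by blast
    show "finite (S \<inter> f -` {q})" by (rule sm_fibre_finite[OF sm])
    fix x assume "x \<in> S" "f x \<noteq> q"
    then show "\<exists>U W g. openin (top_of_set S) U \<and> x \<in> U \<and> openin (top_of_set T) W \<and> homeomorphism U W f g"
      using sm_loc[OF sm \<open>x \<in> S\<close> all1[OF \<open>x \<in> S\<close>]] by blast
  qed
  have "S \<inter> f -` {y} \<subseteq> S - f -` {q}" using y by auto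
  then have "inj_on f (S \<inter> f -` {y})" using inj inj_on_subset by blast
  then have "card (S \<inter> f -` {y}) \<le> 1" by (rule card_le1_inj[where y=y]) auto
  then show False using sm_bdeg[OF sm y(1)] deg by simp
qed

lemma sm_crit_deg:
  assumes sm: "sm S T f M N" and p: "p \<in> S" and ld: "local_degree S T f p > 1"
  shows "branched_degree S T f > 1"
proof -
  have finN: "finite N" using sm unfolding sm_def by blast
  have bp: "branched_at S T f p (local_degree S T f p)" "local_degree S T f p > 0"
    using sm_ld_pos[OF sm p] by auto
  have oS: "openin (top_of_set S) S" by simp
  obtain y A where y: "y \<in> T" "y \<notin> N" and A: "A \<subseteq> S \<inter> S \<inter> f -` {y}" "finite A" "card A = local_degree S T f p"
    using chart_lower[OF bp oS p finN] by blast
  have "card A \<le> card (S \<inter> f -` {y})" using A(1) sm_fibre_finite[OF sm] by (intro card_mono) auto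
  then show ?thesis using sm_bdeg[OF sm, of y] y A(3) ld by simp
qed

lemma sm_crit_other:
  assumes sm: "sm S T f M N" and p: "p \<in> M" and ld: "local_degree S T f p > 1"
  shows "\<exists>p'\<in>M. p' \<noteq> p \<and> local_degree S T f p' > 1"
proof (rule ccontr)
  assume "\<not> (\<exists>p'\<in>M. p' \<noteq> p \<and> local_degree S T f p' > 1)"
  then have nc: "\<And>p'. p' \<in> M \<Longrightarrow> p' \<noteq> p \<Longrightarrow> \<not> local_degree S T f p' > 1" by blast
  have all1: "local_degree S T f x = 1" if x: "x \<in> S" and xp: "x \<noteq> p" for x
  proof (cases "x \<in> M")
    case True
    then have "\<not> local_degree S T f x > 1" using nc xp by blast
    moreover have "local_degree S T f x > 0" using sm_ld_pos(2)[OF sm x] .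
    ultimately show ?thesis by linarith
  next
    case False
    show ?thesis using sm_ld_one[OF sm x False] .
  qed
  have hS: "S homeomorphic sphere (0::real^3) 1" and hT: "T homeomorphic sphere (0::real^3) 1"
    and MS: "M \<subseteq> S" using sm unfolding sm_def by blast+
  have pS: "p \<in> S" using p MS by blast
  define q where "q = f p"
  have qT: "q \<in> T" using sm_onto[OF sm] pS q_def by blast
  have inj: "inj_on f (S - f -` {q})"
  proof (rule key_inj[OF hS hT sm_cont[OF sm] sm_onto[OF sm] qT])
    show "finite (S \<inter> f -` {q})" by (rule sm_fibre_finite[OF sm])
    fix x assume x: "x \<in> S" "f x \<noteq> q"
    then have "x \<noteq> p" using q_def by blast
    then have "local_degree S T f x = 1" using all1 x(1) by blast
    then show "\<exists>U W g. openin (top_of_set S) U \<and> x \<in> U \<and> openin (top_of_set T) W \<and> homeomorphism U W f g"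
      using sm_loc[OF sm x(1)] by blast
  qed
  have bp: "branched_at S T f p (local_degree S T f p)" "local_degree S T f p > 0"
    using sm_ld_pos[OF sm pS] by auto
  have oS: "openin (top_of_set S) S" by simp
  obtain y A where y: "y \<in> T" "y \<noteq> f p" and A: "A \<subseteq> S \<inter> S \<inter> f -` {y}" "finite A" "card A = local_degree S T f p"
    using chart_lower[OF bp oS pS, of "{}"] by blast
  have "A \<subseteq> S - f -` {q}" using A(1) y(2) q_def by auto
  then have "inj_on f A" using inj inj_on_subset by blast
  then have "card A \<le> 1" by (rule card_le1_inj[where y=y]) (use A(1) in auto)
  then show False using A(3) ld by simp
qed

lemma graph_edge:
  assumes "graph V E" "e \<in> E"
  obtains a b where "a \<noteq> b" "e = {a, b}" "a \<in> V" "b \<in> V"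
  using assms unfolding graph_def by blast

lemma edge_other:
  assumes "graph V E" "e \<in> E" "u \<in> e"
  obtains w where "w \<noteq> u" "e = {u, w}" "w \<in> V" "u \<in> V"
proof -
  obtain a b where ab: "a \<noteq> b" "e = {a, b}" "a \<in> V" "b \<in> V" using graph_edge[OF assms(1,2)] by blast
  show ?thesis
  proof (cases "u = a")
    case True
    show ?thesis by (rule that[of b]) (use ab True in auto)
  next
    case False then have "u = b" using ab assms(3) by auto
    show ?thesis by (rule that[of a]) (use ab \<open>u = b\<close> in auto)
  qed
qed

lemma graph_finite_E: "graph V E \<Longrightarrow> finite E"
proof -
  assume g: "graph V E"
  have EP: "E \<subseteq> Pow V"
  proof
    fix e assume "e \<in> E"
    then obtain a b where "a \<noteq> b" "e = {a, b}" "a \<in> V" "b \<in> V" by (rule graph_edge[OF g])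
    then show "e \<in> Pow V" by simp
  qed
  have fV: "finite V" using g unfolding graph_def by blast
  show "finite E" using finite_subset[OF EP] fV by simp
qed

lemma graph_edge_V:
  assumes "graph V E" "{x, y} \<in> E"
  shows "x \<in> V" "y \<in> V"
proof -
  obtain a b where ab: "a \<noteq> b" "{x, y} = {a, b}" "a \<in> V" "b \<in> V" by (rule graph_edge[OF assms])
  then show "x \<in> V" "y \<in> V" by (auto simp: doubleton_eq_iff)
qed

lemma vpath_edge:
  "vpath E xs \<Longrightarrow> Suc i < length xs \<Longrightarrow> {xs ! i, xs ! Suc i} \<in> E"
  unfolding vpath_def by blast

lemma vpath_set:
  assumes "graph V E" "vpath E xs" "2 \<le> length xs"
  shows "set xs \<subseteq> V"
proof
  fix x assume "x \<in> set xs"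
  then obtain k where k: "k < length xs" "xs ! k = x" by (meson in_set_conv_nth)
  show "x \<in> V"
  proof (cases "Suc k < length xs")
    case True
    then have "{xs ! k, xs ! Suc k} \<in> E" using assms(2) vpath_edge by blast
    then show ?thesis using graph_edge_V[OF assms(1)] k(2) by blast
  next
    case False
    then have "k \<ge> 1" "Suc (k - 1) = k" using k(1) assms(3) by auto
    then have "Suc (k - 1) < length xs" using k(1) by simp
    then have "{xs ! (k - 1), xs ! Suc (k - 1)} \<in> E" by (rule vpath_edge[OF assms(2)])
    then have "{xs ! (k - 1), xs ! k} \<in> E" using \<open>Suc (k - 1) = k\<close> by simp
    then show ?thesis using graph_edge_V[OF assms(1)] k(2) by blast
  qed
qed

lemma vpath_rev:
  assumes "vpath E xs"
  shows "vpath E (rev xs)"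
  unfolding vpath_def
proof (intro conjI allI impI)
  show "rev xs \<noteq> []" "distinct (rev xs)" using assms unfolding vpath_def by auto
  fix i assume i: "Suc i < length (rev xs)"
  define n where "n = length xs"
  have i': "Suc i < n" using i n_def by simp
  have "rev xs ! i = xs ! (n - Suc i)" using rev_nth[of i xs] i' n_def by simp
  moreover have "rev xs ! Suc i = xs ! (n - Suc (Suc i))" using rev_nth[of "Suc i" xs] i' n_def by simp
  moreover have "Suc (n - Suc (Suc i)) = n - Suc i" using i' by simp
  moreover have "{xs ! (n - Suc (Suc i)), xs ! Suc (n - Suc (Suc i))} \<in> E"
    using assms vpath_edge[of E xs "n - Suc (Suc i)"] i' n_def by simp
  ultimately show "{rev xs ! i, rev xs ! Suc i} \<in> E" by (simp add: insert_commute)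
qed

lemma vpath_snoc:
  assumes "vpath E xs" "w \<notin> set xs" "{last xs, w} \<in> E"
  shows "vpath E (xs @ [w])"
  unfolding vpath_def
proof (intro conjI allI impI)
  show "xs @ [w] \<noteq> []" by simp
  show "distinct (xs @ [w])" using assms unfolding vpath_def by simp
  fix i assume i: "Suc i < length (xs @ [w])"
  have ne: "xs \<noteq> []" using assms unfolding vpath_def by simp
  show "{(xs @ [w]) ! i, (xs @ [w]) ! Suc i} \<in> E"
  proof (cases "Suc i < length xs")
    case True
    then show ?thesis using vpath_edge[OF assms(1) True] by (simp add: nth_append)
  next
    case False
    then have "Suc i = length xs" using i by simp
    then have iv: "i = length xs - 1" by simp
    have "(xs @ [w]) ! i = xs ! i" using \<open>Suc i = length xs\<close> by (simp add: nth_append)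
    also have "\<dots> = last xs" using iv ne by (simp add: last_conv_nth)
    finally have 1: "(xs @ [w]) ! i = last xs" .
    have 2: "(xs @ [w]) ! Suc i = w" using \<open>Suc i = length xs\<close> by (simp add: nth_append)
    show ?thesis using assms(3) 1 2 by simp
  qed
qed

lemma vpath_drop:
  assumes "vpath E xs" "j < length xs"
  shows "vpath E (drop j xs)"
  unfolding vpath_def
proof (intro conjI allI impI)
  show "drop j xs \<noteq> []" using assms by simp
  show "distinct (drop j xs)" using assms unfolding vpath_def by simp
  fix i assume i: "Suc i < length (drop j xs)"
  then have "Suc (j + i) < length xs" by simp
  then have "{xs ! (j + i), xs ! Suc (j + i)} \<in> E" using vpath_edge[OF assms(1)] by blast
  then show "{drop j xs ! i, drop j xs ! Suc i} \<in> E" using i by simp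
qed

definition cpath :: "'v set set \<Rightarrow> ('v set \<Rightarrow> bool) \<Rightarrow> 'v \<Rightarrow> 'v list \<Rightarrow> bool" where
  "cpath E ce v xs \<longleftrightarrow> vpath E xs \<and> v \<in> set xs \<and> 2 \<le> length xs \<and>
     (\<forall>i. Suc i < length xs \<longrightarrow> ce {xs ! i, xs ! Suc i})"

lemma cpath_rev:
  assumes "cpath E ce v xs"
  shows "cpath E ce v (rev xs)"
  unfolding cpath_def
proof (intro conjI allI impI)
  show "vpath E (rev xs)" using assms vpath_rev unfolding cpath_def by blast
  show "v \<in> set (rev xs)" "2 \<le> length (rev xs)" using assms unfolding cpath_def by auto
  fix i assume i: "Suc i < length (rev xs)"
  define n where "n = length xs"
  have i': "Suc i < n" using i n_def by simp
  have "rev xs ! i = xs ! (n - Suc i)" using rev_nth[of i xs] i' n_def by simp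
  moreover have "rev xs ! Suc i = xs ! (n - Suc (Suc i))" using rev_nth[of "Suc i" xs] i' n_def by simp
  moreover have "Suc (n - Suc (Suc i)) = n - Suc i" using i' by simp
  moreover have "ce {xs ! (n - Suc (Suc i)), xs ! Suc (n - Suc (Suc i))}"
    using assms i' n_def unfolding cpath_def by simp
  ultimately show "ce {rev xs ! i, rev xs ! Suc i}" by (simp add: insert_commute)
qed

lemma cpath_bound:
  assumes "graph V E" "cpath E ce v xs"
  shows "length xs \<le> card V"
proof -
  have "set xs \<subseteq> V" using vpath_set[OF assms(1)] assms(2) unfolding cpath_def by blast
  moreover have "finite V" using assms(1) unfolding graph_def by blast
  moreover have "distinct xs" using assms(2) unfolding cpath_def vpath_def by blast
  ultimately show ?thesis using card_mono[of V "set xs"] distinct_card[of xs] by simp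
qed

lemma cpath_last_leaf:
  assumes tree: "is_tree V E"
    and ext: "\<And>u e. u \<in> V \<Longrightarrow> u \<notin> leaves V E \<Longrightarrow> e \<in> edges_at E u \<Longrightarrow> ce e \<Longrightarrow>
                  \<exists>e'\<in>edges_at E u. e' \<noteq> e \<and> ce e'"
    and cp: "cpath E ce v xs"
    and max: "\<And>ys. cpath E ce v ys \<Longrightarrow> length ys \<le> length xs"
  shows "last xs \<in> leaves V E"
proof (rule ccontr)
  assume nl: "last xs \<notin> leaves V E"
  have g: "graph V E" and nc: "\<not> has_cycle E" using tree unfolding is_tree_def by blast+
  define n where "n = length xs"
  have n2: "2 \<le> n" using cp n_def unfolding cpath_def by simp
  have vp: "vpath E xs" using cp unfolding cpath_def by blast
  have ne: "xs \<noteq> []" using vp unfolding vpath_def by blast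
  have dist: "distinct xs" using vp unfolding vpath_def by blast
  define u where "u = last xs"
  have u_nth: "u = xs ! (n - 1)" using ne u_def n_def last_conv_nth by blast
  define a where "a = xs ! (n - 2)"
  have sidx: "Suc (n - 2) = n - 1" using n2 by simp
  have eE: "{a, u} \<in> E" using vpath_edge[OF vp, of "n - 2"] sidx n2 n_def u_nth a_def by simp
  have "Suc (n - 2) < length xs" using sidx n2 n_def by simp
  then have "ce {xs ! (n - 2), xs ! Suc (n - 2)}" using cp unfolding cpath_def by blast
  then have ce_e: "ce {a, u}" using sidx u_nth a_def by simp
  have uV: "u \<in> V" using vpath_set[OF g vp] n2 n_def u_def ne by auto
  have eat: "{a, u} \<in> edges_at E u" unfolding edges_at_def using eE by simp
  obtain e' where e': "e' \<in> edges_at E u" "e' \<noteq> {a, u}" "ce e'"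
    using ext[OF uV _ eat ce_e] nl u_def by blast
  have e'E: "e' \<in> E" and ue': "u \<in> e'" using e'(1) unfolding edges_at_def by auto
  obtain w where w: "w \<noteq> u" "e' = {u, w}" "w \<in> V" using edge_other[OF g e'E ue'] by blast
  show False
  proof (cases "w \<in> set xs")
    case False
    have "cpath E ce v (xs @ [w])"
      unfolding cpath_def
    proof (intro conjI allI impI)
      show "vpath E (xs @ [w])" using vpath_snoc[OF vp False] e'E w(2) u_def by simp
      show "v \<in> set (xs @ [w])" "2 \<le> length (xs @ [w])" using cp unfolding cpath_def by auto
      fix i assume i: "Suc i < length (xs @ [w])"
      show "ce {(xs @ [w]) ! i, (xs @ [w]) ! Suc i}"
      proof (cases "Suc i < length xs")
        case True
        then show ?thesis using cp unfolding cpath_def by (simp add: nth_append)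
      next
        case False
        then have "Suc i = length xs" using i by simp
        then have iv: "i = length xs - 1" by simp
        have "(xs @ [w]) ! i = xs ! i" using \<open>Suc i = length xs\<close> by (simp add: nth_append)
        also have "\<dots> = u" using iv ne u_def by (simp add: last_conv_nth)
        finally have 1: "(xs @ [w]) ! i = u" .
        have 2: "(xs @ [w]) ! Suc i = w" using \<open>Suc i = length xs\<close> by (simp add: nth_append)
        show ?thesis using e'(3) w(2) 1 2 by simp
      qed
    qed
    then have "length (xs @ [w]) \<le> length xs" by (rule max)
    then show False by simp
  next
    case True
    then obtain j where j: "j < n" "xs ! j = w" using n_def by (meson in_set_conv_nth)
    have jn1: "j \<noteq> n - 1" using j w(1) u_nth by auto
    have jn2: "j \<noteq> n - 2"
    proof
      assume "j = n - 2"
      then have "w = a" using j a_def by simp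
      then show False using e'(2) w(2) by (simp add: insert_commute)
    qed
    have jlt: "j + 3 \<le> n" using j jn1 jn2 by linarith
    have vd: "vpath E (drop j xs)" using vpath_drop[OF vp] j n_def by simp
    have ld: "3 \<le> length (drop j xs)" using jlt n_def by simp
    have hd: "hd (drop j xs) = w" using j n_def by (simp add: hd_drop_conv_nth)
    have lst: "last (drop j xs) = u" using j n_def u_def by simp
    have "{last (drop j xs), hd (drop j xs)} \<in> E" using hd lst e'E w(2) by simp
    then have "has_cycle E" using vd ld unfolding has_cycle_def by blast
    then show False using nc by simp
  qed
qed

lemma cpath_max_leaves:
  assumes tree: "is_tree V E"
    and ext: "\<And>u e. u \<in> V \<Longrightarrow> u \<notin> leaves V E \<Longrightarrow> e \<in> edges_at E u \<Longrightarrow> ce e \<Longrightarrow>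
                  \<exists>e'\<in>edges_at E u. e' \<noteq> e \<and> ce e'"
    and start: "cpath E ce v xs0"
  shows "\<exists>xs. cpath E ce v xs \<and> hd xs \<in> leaves V E \<and> last xs \<in> leaves V E"
proof -
  have g: "graph V E" using tree unfolding is_tree_def by blast
  let ?P = "\<lambda>k. \<exists>xs. cpath E ce v xs \<and> length xs = k"
  have P0: "?P (length xs0)" using start by blast
  have Pb: "\<forall>y. ?P y \<longrightarrow> y \<le> card V" using cpath_bound[OF g] by blast
  have "\<exists>k. ?P k \<and> (\<forall>y. ?P y \<longrightarrow> y \<le> k)" using Nat.ex_has_greatest_nat[OF P0 Pb] .
  then obtain k xs where xs: "cpath E ce v xs" "length xs = k" and mx: "\<And>ys. cpath E ce v ys \<Longrightarrow> length ys \<le> k"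
    by blast
  have max: "\<And>ys. cpath E ce v ys \<Longrightarrow> length ys \<le> length xs" using mx xs(2) by blast
  have l1: "last xs \<in> leaves V E" by (rule cpath_last_leaf[OF tree ext xs(1) max])
  have r: "cpath E ce v (rev xs)" by (rule cpath_rev[OF xs(1)])
  have maxr: "\<And>ys. cpath E ce v ys \<Longrightarrow> length ys \<le> length (rev xs)" using max by simp
  have "last (rev xs) \<in> leaves V E" by (rule cpath_last_leaf[OF tree ext r maxr])
  moreover have "xs \<noteq> []" using xs(1) unfolding cpath_def vpath_def by blast
  ultimately have "hd xs \<in> leaves V E" by (simp add: last_rev)
  then show ?thesis using xs(1) l1 by blast
qed

lemma is_coverD:
  assumes "is_cover VY EY Y SY iY VZ EZ Z SZ iZ F f"
  shows "tree_of_spheres VY EY Y SY iY" "tree_of_spheres VZ EZ Z SZ iZ"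
    "\<forall>a b. {a, b} \<in> EY \<longrightarrow> {F a, F b} \<in> EZ"
    "F ` internal VY EY \<subseteq> internal VZ EZ"
    "\<forall>v\<in>internal VY EY.
        branched_covering (SY v) (SZ (F v)) (f v) \<and>
        covering_space (SY v - marked EY iY v) (f v) (SZ (F v) - marked EZ iZ (F v)) \<and>
        (\<forall>e\<in>edges_at EY v. f v (iY v e) = iZ (F v) (F ` e))"
    "\<forall>v1 v2. {v1, v2} \<in> EY \<and> v1 \<in> internal VY EY \<and> v2 \<in> internal VY EY \<longrightarrow>
        local_degree (SY v1) (SZ (F v1)) (f v1) (iY v1 {v1, v2}) =
        local_degree (SY v2) (SZ (F v2)) (f v2) (iY v2 {v1, v2})"
  using assms unfolding is_cover_def by blast+

lemma tosD:
  assumes "tree_of_spheres V E X S i"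
  shows "is_tree V E" "leaves V E = X" "3 \<le> card X"
    "\<forall>v\<in>internal V E. S v homeomorphic sphere (0::real^3) 1 \<and>
        inj_on (i v) (edges_at E v) \<and> i v ` edges_at E v \<subseteq> S v"
  using assms unfolding tree_of_spheres_def by blast+

lemma tree_graph: "is_tree V E \<Longrightarrow> graph V E"
  unfolding is_tree_def by blast

lemma marked_finite:
  assumes "is_tree V E"
  shows "finite (marked E i v)"
proof -
  have "finite E" using graph_finite_E[OF tree_graph[OF assms]] .
  then have "finite (edges_at E v)" unfolding edges_at_def by simp
  then show ?thesis unfolding marked_def by simp
qed

lemma cover_sm:
  assumes cov: "is_cover VY EY Y SY iY VZ EZ Z SZ iZ F f" and u: "u \<in> internal VY EY"
  shows "sm (SY u) (SZ (F u)) (f u) (marked EY iY u) (marked EZ iZ (F u))"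
proof -
  note C = is_coverD[OF cov]
  have tY: "is_tree VY EY" and tZ: "is_tree VZ EZ" using tosD(1) C(1,2) by blast+
  have Fu: "F u \<in> internal VZ EZ" using C(4) u by blast
  have hS: "SY u homeomorphic sphere (0::real^3) 1" and MS: "iY u ` edges_at EY u \<subseteq> SY u"
    using tosD(4)[OF C(1)] u by blast+
  have hT: "SZ (F u) homeomorphic sphere (0::real^3) 1"
    using tosD(4)[OF C(2)] Fu by blast
  have bc: "branched_covering (SY u) (SZ (F u)) (f u)"
    and cs: "covering_space (SY u - marked EY iY u) (f u) (SZ (F u) - marked EZ iZ (F u))"
    and fe: "\<forall>e\<in>edges_at EY u. f u (iY u e) = iZ (F u) (F ` e)"
    using C(5) u by blast+
  have gY: "graph VY EY" using tree_graph[OF tY] .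
  have fMN: "f u ` marked EY iY u \<subseteq> marked EZ iZ (F u)"
  proof
    fix x assume "x \<in> f u ` marked EY iY u"
    then obtain e where e: "e \<in> edges_at EY u" "x = f u (iY u e)" unfolding marked_def by blast
    have eE: "e \<in> EY" and ue: "u \<in> e" using e(1) unfolding edges_at_def by auto
    obtain w where w: "w \<noteq> u" "e = {u, w}" by (rule edge_other[OF gY eE ue])
    have "{F u, F w} \<in> EZ" using C(3) eE w(2) by blast
    moreover have "F ` e = {F u, F w}" using w(2) by simp
    ultimately have "F ` e \<in> edges_at EZ (F u)" unfolding edges_at_def by simp
    moreover have "x = iZ (F u) (F ` e)" using fe e by simp
    ultimately show "x \<in> marked EZ iZ (F u)" unfolding marked_def by blast
  qed
  show ?thesis unfolding sm_def
    using hS hT bc cs marked_finite[OF tY] marked_finite[OF tZ] MS fMN unfolding marked_def by blast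
qed

definition ldeg where "ldeg SY SZ F f iY u e = local_degree (SY u) (SZ (F u)) (f u) (iY u e)"
definition cedge where "cedge VY EY SY SZ F f iY e \<longleftrightarrow> (\<exists>u\<in>e. u \<in> internal VY EY \<and> 1 < ldeg SY SZ F f iY u e)"

lemma vdeg_internal:
  "u \<in> internal VY EY \<Longrightarrow> cover_vdeg VY EY SY iY SZ F f u = branched_degree (SY u) (SZ (F u)) (f u)"
  unfolding cover_vdeg_def by simp

lemma G1:
  assumes cov: "is_cover VY EY Y SY iY VZ EZ Z SZ iZ F f" and u: "u \<in> internal VY EY"
    and e: "e \<in> edges_at EY u" and ld: "1 < ldeg SY SZ F f iY u e"
  shows "1 < cover_vdeg VY EY SY iY SZ F f u"
proof -
  have sm: "sm (SY u) (SZ (F u)) (f u) (marked EY iY u) (marked EZ iZ (F u))" by (rule cover_sm[OF cov u])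
  have "marked EY iY u \<subseteq> SY u" using sm unfolding sm_def by blast
  then have p: "iY u e \<in> SY u" using e unfolding marked_def by blast
  have "cover_vdeg VY EY SY iY SZ F f u = branched_degree (SY u) (SZ (F u)) (f u)"
    using u unfolding cover_vdeg_def by simp
  then show ?thesis using sm_crit_deg[OF sm p] ld unfolding ldeg_def by simp
qed

lemma G2:
  assumes cov: "is_cover VY EY Y SY iY VZ EZ Z SZ iZ F f" and u: "u \<in> internal VY EY"
    and d: "1 < cover_vdeg VY EY SY iY SZ F f u"
  shows "\<exists>e\<in>edges_at EY u. 1 < ldeg SY SZ F f iY u e"
proof -
  have sm: "sm (SY u) (SZ (F u)) (f u) (marked EY iY u) (marked EZ iZ (F u))" by (rule cover_sm[OF cov u])
  obtain p where p: "p \<in> marked EY iY u" "local_degree (SY u) (SZ (F u)) (f u) p > 1"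
  proof -
    have "cover_vdeg VY EY SY iY SZ F f u = branched_degree (SY u) (SZ (F u)) (f u)"
      using u unfolding cover_vdeg_def by simp
    then have "1 < branched_degree (SY u) (SZ (F u)) (f u)" using d by simp
    then show ?thesis using sm_crit_exists[OF sm] that by blast
  qed
  then obtain e where "e \<in> edges_at EY u" "p = iY u e" unfolding marked_def by blast
  then show ?thesis using p(2) unfolding ldeg_def by blast
qed

lemma G3:
  assumes cov: "is_cover VY EY Y SY iY VZ EZ Z SZ iZ F f" and u: "u \<in> internal VY EY"
    and e: "e \<in> edges_at EY u" and ld: "1 < ldeg SY SZ F f iY u e"
  shows "\<exists>e'\<in>edges_at EY u. e' \<noteq> e \<and> 1 < ldeg SY SZ F f iY u e'"
proof -
  have sm: "sm (SY u) (SZ (F u)) (f u) (marked EY iY u) (marked EZ iZ (F u))" by (rule cover_sm[OF cov u])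
  have pM: "iY u e \<in> marked EY iY u" using e unfolding marked_def by blast
  obtain p' where p': "p' \<in> marked EY iY u" "p' \<noteq> iY u e" "local_degree (SY u) (SZ (F u)) (f u) p' > 1"
    using sm_crit_other[OF sm pM] ld unfolding ldeg_def by auto
  then obtain e' where e': "e' \<in> edges_at EY u" "p' = iY u e'" unfolding marked_def by blast
  then have "e' \<noteq> e" using p'(2) by blast
  then show ?thesis using e' p'(3) unfolding ldeg_def by blast
qed

lemma G4:
  assumes cov: "is_cover VY EY Y SY iY VZ EZ Z SZ iZ F f"
    and ce: "cedge VY EY SY SZ F f iY e" and eE: "e \<in> EY" and ue: "u \<in> e" and u: "u \<in> internal VY EY"
  shows "1 < ldeg SY SZ F f iY u e"
proof -
  note C = is_coverD[OF cov]
  have gY: "graph VY EY" using tree_graph[OF tosD(1)[OF C(1)]] .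
  obtain w where w: "w \<in> e" "w \<in> internal VY EY" "1 < ldeg SY SZ F f iY w e"
    using ce unfolding cedge_def by blast
  show ?thesis
  proof (cases "w = u")
    case True then show ?thesis using w by simp
  next
    case False
    obtain x where x: "x \<noteq> u" "e = {u, x}" by (rule edge_other[OF gY eE ue])
    have wx: "w = x" using w(1) x(2) False by blast
    have "{u, w} \<in> EY" using eE x(2) wx by simp
    then have "local_degree (SY u) (SZ (F u)) (f u) (iY u {u, w}) =
        local_degree (SY w) (SZ (F w)) (f w) (iY w {u, w})"
      using C(6) u w(2) by blast
    then show ?thesis using w(3) x(2) wx unfolding ldeg_def by simp
  qed
qed

lemma leaf_edge:
  assumes "y \<in> leaves V E"
  obtains e where "edges_at E y = {e}"
proof -
  have "card (edges_at E y) = 1" using assms unfolding leaves_def by simp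
  then obtain e where "edges_at E y = {e}" by (rule card_1_singletonE)
  then show ?thesis by (rule that)
qed

lemma G5:
  assumes y: "y \<notin> internal VY EY" and e: "edges_at EY y = {e}" and eu: "e = {y, u}" and uy: "u \<noteq> y"
  shows "cover_vdeg VY EY SY iY SZ F f y = ldeg SY SZ F f iY u e"
proof -
  have 1: "(THE e'. e' \<in> edges_at EY y) = e" using e by simp
  have 2: "(THE u'. u' \<in> e \<and> u' \<noteq> y) = u"
  proof (rule the_equality)
    show "u \<in> e \<and> u \<noteq> y" using eu uy by simp
    fix u' assume "u' \<in> e \<and> u' \<noteq> y" then show "u' = u" using eu by blast
  qed
  show ?thesis unfolding cover_vdeg_def ldeg_def using y 1 2 by (simp add: Let_def)
qed

lemma G6:
  assumes tree: "is_tree V E" and c3: "3 \<le> card (leaves V E)"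
    and y: "y \<in> leaves V E" and e: "edges_at E y = {e}" and eu: "e = {y, u}" and uy: "u \<noteq> y"
  shows "u \<in> internal V E"
proof (rule ccontr)
  assume nu: "u \<notin> internal V E"
  have g: "graph V E" using tree_graph[OF tree] .
  have eE: "e \<in> E" using e unfolding edges_at_def by blast
  have uV: "u \<in> V" using graph_edge_V[OF g] eE eu by blast
  have ul: "u \<in> leaves V E" using nu uV unfolding internal_def by blast
  obtain e2 where e2: "edges_at E u = {e2}" by (rule leaf_edge[OF ul])
  have "e \<in> edges_at E u" using eE eu unfolding edges_at_def by simp
  then have eu2: "edges_at E u = {e}" using e2 by simp
  have con: "graph_connected V E" using tree unfolding is_tree_def by blast
  have yV: "y \<in> V" using y unfolding leaves_def by blast
  have VS: "V \<subseteq> {y, u}"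
  proof
    fix x assume xV: "x \<in> V"
    then obtain xs where xs: "path_between E y x xs" using con yV unfolding graph_connected_def by blast
    have vp: "vpath E xs" and hd: "hd xs = y" and lst: "last xs = x"
      using xs unfolding path_between_def by auto
    have ne: "xs \<noteq> []" and dist: "distinct xs" using vp unfolding vpath_def by auto
    have x0: "xs ! 0 = y" using hd ne by (simp add: hd_conv_nth)
    show "x \<in> {y, u}"
    proof (cases "length xs \<le> 2")
      case True
      show ?thesis
      proof (cases "length xs = 1")
        case True
        then have "x = xs ! 0" using lst ne by (simp add: last_conv_nth)
        then show ?thesis using x0 by simp
      next
        case False
        moreover have "length xs \<noteq> 0" using ne by simp
        ultimately have l2: "length xs = 2" using True by linarith
        have "{xs ! 0, xs ! Suc 0} \<in> E" using vpath_edge[OF vp] l2 by simp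
        then have "{y, xs ! 1} \<in> edges_at E y" using x0 unfolding edges_at_def by simp
        then have "{y, xs ! 1} = e" using e by simp
        then have "xs ! 1 \<in> e" by blast
        then have "xs ! 1 \<in> {y, u}" using eu by simp
        moreover have "xs ! 1 \<noteq> xs ! 0" using dist l2 by (simp add: nth_eq_iff_index_eq)
        ultimately have "xs ! 1 = u" using x0 by auto
        moreover have "x = xs ! 1" using lst ne l2 by (simp add: last_conv_nth)
        ultimately show ?thesis by simp
      qed
    next
      case False
      then have l3: "2 < length xs" by simp
      have "{xs ! 0, xs ! Suc 0} \<in> E" using vpath_edge[OF vp] l3 by simp
      then have "{y, xs ! 1} \<in> edges_at E y" using x0 unfolding edges_at_def by simp
      then have "{y, xs ! 1} = e" using e by simp
      then have "xs ! 1 \<in> e" by blast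
      then have "xs ! 1 \<in> {y, u}" using eu by simp
      moreover have "xs ! 1 \<noteq> xs ! 0" using nth_eq_iff_index_eq[OF dist, of 1 0] l3 ne by simp
      ultimately have x1: "xs ! 1 = u" using x0 by auto
      have "{xs ! 1, xs ! Suc 1} \<in> E" using vpath_edge[OF vp] l3 by simp
      then have "{u, xs ! 2} \<in> edges_at E u" using x1 unfolding edges_at_def by (simp add: numeral_2_eq_2)
      then have "{u, xs ! 2} = e" using eu2 by simp
      then have "xs ! 2 \<in> {y, u}" using eu by blast
      moreover have "xs ! 2 \<noteq> xs ! 0" "xs ! 2 \<noteq> xs ! 1"
        using nth_eq_iff_index_eq[OF dist, of 2 0] nth_eq_iff_index_eq[OF dist, of 2 1] l3 ne by simp_all
      ultimately show ?thesis using x0 x1 by auto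
    qed
  qed
  have "leaves V E \<subseteq> {y, u}" using VS unfolding leaves_def by blast
  then have "card (leaves V E) \<le> card {y, u}" by (intro card_mono) auto
  also have "\<dots> \<le> 2" by (simp add: card_insert_le_m1)
  finally show False using c3 by simp
qed

lemma G7:
  assumes cov: "is_cover VY EY Y SY iY VZ EZ Z SZ iZ F f"
    and ce: "cedge VY EY SY SZ F f iY e" and eE: "e \<in> EY" and xe: "x \<in> e"
  shows "1 < cover_vdeg VY EY SY iY SZ F f x"
proof -
  note C = is_coverD[OF cov]
  have tY: "is_tree VY EY" using tosD(1)[OF C(1)] .
  have gY: "graph VY EY" using tree_graph[OF tY] .
  obtain w where w: "w \<noteq> x" "e = {x, w}" "w \<in> VY" "x \<in> VY" by (rule edge_other[OF gY eE xe])
  have eat: "e \<in> edges_at EY x" using eE xe unfolding edges_at_def by simp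
  show ?thesis
  proof (cases "x \<in> internal VY EY")
    case True
    have "1 < ldeg SY SZ F f iY x e" by (rule G4[OF cov ce eE xe True])
    then show ?thesis by (rule G1[OF cov True eat])
  next
    case False
    then have xl: "x \<in> leaves VY EY" using w(4) unfolding internal_def by blast
    obtain e0 where e0: "edges_at EY x = {e0}" by (rule leaf_edge[OF xl])
    then have ex: "edges_at EY x = {e}" using eat by simp
    have vd: "cover_vdeg VY EY SY iY SZ F f x = ldeg SY SZ F f iY w e"
      by (rule G5[OF False ex w(2) w(1)])
    obtain z where z: "z \<in> e" "z \<in> internal VY EY" "1 < ldeg SY SZ F f iY z e"
      using ce unfolding cedge_def by blast
    have "z \<noteq> x" using z(2) False by blast
    then have "z = w" using z(1) w(2) by blast
    then show ?thesis using vd z(3) by simp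
  qed
qed

theorem lemma2p21:
  fixes VY :: "'v set" and EY :: "'v set set" and Y :: "'v set"
    and SY :: "'v \<Rightarrow> (real^3) set" and iY :: "'v \<Rightarrow> 'v set \<Rightarrow> real^3"
    and VZ :: "'w set" and EZ :: "'w set set" and Z :: "'w set"
    and SZ :: "'w \<Rightarrow> (real^3) set" and iZ :: "'w \<Rightarrow> 'w set \<Rightarrow> real^3"
    and F :: "'v \<Rightarrow> 'w" and f :: "'v \<Rightarrow> real^3 \<Rightarrow> real^3"
  assumes "is_cover VY EY Y SY iY VZ EZ Z SZ iZ F f"
    and "v \<in> VY" and "1 < cover_vdeg VY EY SY iY SZ F f v"
  shows "\<exists>y1\<in>Y. \<exists>y2\<in>Y. y1 \<noteq> y2 \<and>
           1 < cover_vdeg VY EY SY iY SZ F f y1 \<and> 1 < cover_vdeg VY EY SY iY SZ F f y2 \<and>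
           (\<exists>xs. path_between EY y1 y2 xs \<and> v \<in> set xs \<and>
                 (\<forall>u\<in>set xs. 1 < cover_vdeg VY EY SY iY SZ F f u))"
proof -
  note cov = assms(1)
  note C = is_coverD[OF cov]
  have tY: "is_tree VY EY" using tosD(1)[OF C(1)] .
  have gY: "graph VY EY" using tree_graph[OF tY] .
  have Yl: "leaves VY EY = Y" and c3: "3 \<le> card Y" using tosD(2,3)[OF C(1)] by auto
  define ce where "ce = cedge VY EY SY SZ F f iY"
  have ext: "\<exists>e'\<in>edges_at EY u. e' \<noteq> e \<and> ce e'"
    if u: "u \<in> VY" "u \<notin> leaves VY EY" and e: "e \<in> edges_at EY u" and cee: "ce e" for u e
  proof -
    have ui: "u \<in> internal VY EY" using u unfolding internal_def by blast
    have eE: "e \<in> EY" and ue: "u \<in> e" using e unfolding edges_at_def by auto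
    have "1 < ldeg SY SZ F f iY u e" using G4[OF cov _ eE ue ui] cee ce_def by blast
    then obtain e' where e': "e' \<in> edges_at EY u" "e' \<noteq> e" "1 < ldeg SY SZ F f iY u e'"
      using G3[OF cov ui e] by blast
    have "u \<in> e'" using e'(1) unfolding edges_at_def by simp
    then have "ce e'" unfolding ce_def cedge_def using ui e'(3) by blast
    then show ?thesis using e' by blast
  qed
  obtain w e where we: "w \<noteq> v" "e = {v, w}" "e \<in> EY" "ce e"
  proof (cases "v \<in> internal VY EY")
    case True
    obtain e where e: "e \<in> edges_at EY v" "1 < ldeg SY SZ F f iY v e"
      using G2[OF cov True assms(3)] by blast
    have eE: "e \<in> EY" and ve: "v \<in> e" using e(1) unfolding edges_at_def by auto
    obtain w where w: "w \<noteq> v" "e = {v, w}" by (rule edge_other[OF gY eE ve])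
    have "ce e" unfolding ce_def cedge_def using ve True e(2) by blast
    then show ?thesis using that w eE by blast
  next
    case False
    then have vl: "v \<in> leaves VY EY" using assms(2) unfolding internal_def by blast
    obtain e where e: "edges_at EY v = {e}" by (rule leaf_edge[OF vl])
    have eE: "e \<in> EY" and ve: "v \<in> e" using e unfolding edges_at_def by auto
    obtain w where w: "w \<noteq> v" "e = {v, w}" by (rule edge_other[OF gY eE ve])
    have wi: "w \<in> internal VY EY" using G6[OF tY _ vl e w(2) w(1)] c3 Yl by simp
    have "cover_vdeg VY EY SY iY SZ F f v = ldeg SY SZ F f iY w e" by (rule G5[OF False e w(2) w(1)])
    then have "1 < ldeg SY SZ F f iY w e" using assms(3) by simp
    moreover have "w \<in> e" using w(2) by simp
    ultimately have "ce e" unfolding ce_def cedge_def using wi by blast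
    then show ?thesis using that w eE by blast
  qed
  have start: "cpath EY ce v [v, w]"
    unfolding cpath_def vpath_def
  proof (intro conjI allI impI)
    show "[v, w] \<noteq> []" "distinct [v, w]" "v \<in> set [v, w]" "2 \<le> length [v, w]" using we(1) by auto
    fix i assume "Suc i < length [v, w]"
    then have i: "i = 0" by simp
    show "{[v, w] ! i, [v, w] ! Suc i} \<in> EY" using i we(2,3) by simp
    show "ce {[v, w] ! i, [v, w] ! Suc i}" using i we(2,4) by simp
  qed
  obtain xs where xs: "cpath EY ce v xs" "hd xs \<in> leaves VY EY" "last xs \<in> leaves VY EY"
    using cpath_max_leaves[OF tY ext start] by blast
  have vp: "vpath EY xs" and vxs: "v \<in> set xs" and l2: "2 \<le> length xs"
    and cei: "\<And>i. Suc i < length xs \<Longrightarrow> ce {xs ! i, xs ! Suc i}"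
    using xs(1) unfolding cpath_def by auto
  have ne: "xs \<noteq> []" and dist: "distinct xs" using vp unfolding vpath_def by auto
  have crit: "1 < cover_vdeg VY EY SY iY SZ F f u" if u: "u \<in> set xs" for u
  proof -
    obtain k where k: "k < length xs" "xs ! k = u" using u by (meson in_set_conv_nth)
    show ?thesis
    proof (cases "Suc k < length xs")
      case True
      have "ce {xs ! k, xs ! Suc k}" by (rule cei[OF True])
      moreover have "{xs ! k, xs ! Suc k} \<in> EY" by (rule vpath_edge[OF vp True])
      ultimately show ?thesis using G7[OF cov] k(2) ce_def by blast
    next
      case False
      then have sk: "Suc (k - 1) = k" "Suc (k - 1) < length xs" using k(1) l2 by auto
      have "ce {xs ! (k - 1), xs ! Suc (k - 1)}" by (rule cei[OF sk(2)])
      moreover have "{xs ! (k - 1), xs ! Suc (k - 1)} \<in> EY" by (rule vpath_edge[OF vp sk(2)])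
      ultimately have "ce {xs ! (k - 1), xs ! k}" "{xs ! (k - 1), xs ! k} \<in> EY" using sk(1) by simp_all
      then show ?thesis using G7[OF cov] k(2) ce_def by blast
    qed
  qed
  have hdn: "hd xs = xs ! 0" using ne by (simp add: hd_conv_nth)
  have lsn: "last xs = xs ! (length xs - 1)" using ne by (simp add: last_conv_nth)
  have "xs ! 0 \<noteq> xs ! (length xs - 1)"
    using nth_eq_iff_index_eq[OF dist, of 0 "length xs - 1"] l2 ne by simp
  then have neq: "hd xs \<noteq> last xs" using hdn lsn by simp
  have "hd xs \<in> set xs" "last xs \<in> set xs" using ne by auto
  then have "1 < cover_vdeg VY EY SY iY SZ F f (hd xs)" "1 < cover_vdeg VY EY SY iY SZ F f (last xs)"
    using crit by auto
  moreover have "path_between EY (hd xs) (last xs) xs" unfolding path_between_def using vp by simp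
  ultimately show ?thesis using xs(2,3) Yl neq vxs crit by blast
qed

end
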